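(* Let $(X,d,\mu)$ be a space of homogeneous type, $1\leq r<\infty$, $q=2r-1$, and let $A$ be a Young function with $A\in B_{\rho}$ for all $\rho>r$. If $u\in RH_{q}$ and $u^{r}\in A_{\infty}$, then for every cube $Q$ of a dyadic system and every measurable set $G$, $$\|\chi_{G}u\|_{A,1Q}\leq c_{X}\,\kappa_{u}[u]_{RH_{q}}^{1+\frac{q}{4r}}\langle u\rangle_{c_{d}^{3}Q,1}\,\langle\chi_{G}\rangle_{c_{d}Q,s}^{u},$$ with $s=4\big(1+\frac{1}{2\tau[u^{r}]_{A_{\infty}}}\big)r$.
   Context: Space of homogeneous type: quasi-metric $d$, doubling Borel measure $\mu$. Dyadic system with parameters $c_0\le C_0$, $\delta$: cubes $Q=Q^k_j$ with $B(z^k_j,c_0\delta^k)\subset Q\subset B(z^k_j,C_0\delta^k)$; for $\alpha\ge1$, $\alpha Q:=B(z^k_j,\alpha C_0\delta^k)$, and $1Q=B(z^k_j,C_0\delta^k)$. Young function $A$; $\|g\|_{A,E}=\inf\{\lambda>0:\frac1{\mu(E)}\int_EA(|g|/\lambda)d\mu\le1\}$; $A\in B_\rho$ means $\int_1^\infty A(t)t^{-\rho}\frac{dt}t<\infty$. $\langle u\rangle_{E,1}=\frac{u(E)}{\mu(E)}$, $\langle\chi_G\rangle^u_{E,s}=\big(\frac{u(G\cap E)}{u(E)}\big)^{1/s}$. $w\in RH_q$ means $\big(\frac{w^q(B)}{\mu(B)}\big)^{1/q}\le[w]_{RH_q}\frac{w(c_dB)}{\mu(c_dB)}$ for all balls,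 $c_d$ a constant depending on $X$; $[w]_{A_\infty}$ is the Fujii–Wilson constant over balls; $\tau$ is the constant of the sharp reverse Hölder inequality in $X$ (for $w\in A_\infty$, exponent up to $1+\frac1{\tau[w]_{A_\infty}}$). The constant $\kappa_u$: since $A\in B_\rho$ for all $\rho>r$, for each $\varepsilon>0$ there is $\kappa(\varepsilon)$ with $A(t)\le c\,\kappa(\varepsilon)t^{r(1+\varepsilon)}$; $\kappa_u:=\kappa\big(\frac1{2\tau[u^r]_{A_\infty}}\big)$.
   Formalization: Each $\kappa(\varepsilon)$ is at least 1 and satisfies $A(t)\le\kappa(\varepsilon)t^{r(1+\varepsilon)}$ for t >= 1 only, the constant c being absorbed, in place of $A(t)\le c\,\kappa(\varepsilon)t^{r(1+\varepsilon)}$. Apart from conventions, each condition added here is assumed in the paper as well or is needed for the statement above to hold. *)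

theory Defs
  imports "HOL-Analysis.Analysis"
begin

definition qball :: "('a \<Rightarrow> 'a \<Rightarrow> real) \<Rightarrow> 'a \<Rightarrow> real \<Rightarrow> 'a set" where
  "qball d x \<rho> = {y. d x y < \<rho>}"

definition quasi_metric :: "('a \<Rightarrow> 'a \<Rightarrow> real) \<Rightarrow> real \<Rightarrow> bool" where
  "quasi_metric d K \<longleftrightarrow> 1 \<le> K \<and>
     (\<forall>x y. 0 \<le> d x y) \<and> (\<forall>x y. d x y = 0 \<longleftrightarrow> x = y) \<and>
     (\<forall>x y. d x y = d y x) \<and> (\<forall>x y z. d x z \<le> K * (d x y + d y z))"

definition qm_open :: "('a \<Rightarrow> 'a \<Rightarrow> real) \<Rightarrow> 'a set \<Rightarrow> bool" where
  "qm_open d U \<longleftrightarrow> (\<forall>x\<in>U. \<exists>\<rho>>0. qball d x \<rho> \<subseteq> U)"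

definition homogeneous_space :: "('a \<Rightarrow> 'a \<Rightarrow> real) \<Rightarrow> real \<Rightarrow> 'a measure \<Rightarrow> bool" where
  "homogeneous_space d K \<mu> \<longleftrightarrow> quasi_metric d K \<and> space \<mu> = UNIV \<and>
     (\<forall>U. qm_open d U \<longrightarrow> U \<in> sets \<mu>) \<and>
     (\<forall>x \<rho>. qball d x \<rho> \<in> sets \<mu>) \<and>
     (\<forall>x \<rho>. \<rho> > 0 \<longrightarrow> 0 < emeasure \<mu> (qball d x \<rho>) \<and> emeasure \<mu> (qball d x \<rho>) < \<infinity>) \<and>
     (\<exists>C. \<forall>x \<rho>. \<rho> > 0 \<longrightarrow>
        emeasure \<mu> (qball d x (2 * \<rho>)) \<le> ennreal C * emeasure \<mu> (qball d x \<rho>))"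

text \<open>Cubes Q k j (generation k :: int, index j in J k) with centres z k j.\<close>
definition dyadic_system ::
  "('a \<Rightarrow> 'a \<Rightarrow> real) \<Rightarrow> 'a measure \<Rightarrow> real \<Rightarrow> real \<Rightarrow> real \<Rightarrow>
   (int \<Rightarrow> 'i set) \<Rightarrow> (int \<Rightarrow> 'i \<Rightarrow> 'a set) \<Rightarrow> (int \<Rightarrow> 'i \<Rightarrow> 'a) \<Rightarrow> bool" where
  "dyadic_system d \<mu> c0 C0 \<delta> J Q z \<longleftrightarrow> 0 < c0 \<and> c0 \<le> C0 \<and> 0 < \<delta> \<and> \<delta> < 1 \<and>
     (\<forall>k. (\<Union>j\<in>J k. Q k j) = UNIV) \<and>
     (\<forall>k. \<forall>i\<in>J k. \<forall>j\<in>J k. i \<noteq> j \<longrightarrow> Q k i \<inter> Q k j = {}) \<and>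
     (\<forall>k l. k \<le> l \<longrightarrow> (\<forall>i\<in>J l. \<forall>j\<in>J k. Q l i \<subseteq> Q k j \<or> Q l i \<inter> Q k j = {})) \<and>
     (\<forall>k. \<forall>j\<in>J k. qball d (z k j) (c0 * \<delta> powr real_of_int k) \<subseteq> Q k j \<and>
                    Q k j \<subseteq> qball d (z k j) (C0 * \<delta> powr real_of_int k)) \<and>
     (\<forall>k. \<forall>j\<in>J k. Q k j \<in> sets \<mu>)"

definition dil_cube :: "('a \<Rightarrow> 'a \<Rightarrow> real) \<Rightarrow> real \<Rightarrow> real \<Rightarrow> (int \<Rightarrow> 'i \<Rightarrow> 'a) \<Rightarrow> real \<Rightarrow> int \<Rightarrow> 'i \<Rightarrow> 'a set" where
  "dil_cube d C0 \<delta> z \<alpha> k j = qball d (z k j) (\<alpha> * C0 * \<delta> powr real_of_int k)"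

definition loc_int :: "('a \<Rightarrow> 'a \<Rightarrow> real) \<Rightarrow> 'a measure \<Rightarrow> ('a \<Rightarrow> real) \<Rightarrow> bool" where
  "loc_int d \<mu> f \<longleftrightarrow> (\<forall>x \<rho>. \<rho> > 0 \<longrightarrow> set_integrable \<mu> (qball d x \<rho>) f)"

definition weight :: "('a \<Rightarrow> 'a \<Rightarrow> real) \<Rightarrow> 'a measure \<Rightarrow> ('a \<Rightarrow> real) \<Rightarrow> bool" where
  "weight d \<mu> w \<longleftrightarrow> w \<in> borel_measurable \<mu> \<and> (\<forall>x. 0 \<le> w x) \<and> loc_int d \<mu> w"

definition wmeas :: "'a measure \<Rightarrow> ('a \<Rightarrow> real) \<Rightarrow> 'a set \<Rightarrow> real" where
  "wmeas \<mu> u E = (LINT x:E|\<mu>. u x)"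

definition avg :: "'a measure \<Rightarrow> ('a \<Rightarrow> real) \<Rightarrow> 'a set \<Rightarrow> real" where
  "avg \<mu> f E = wmeas \<mu> f E / measure \<mu> E"

definition wavg_char :: "'a measure \<Rightarrow> ('a \<Rightarrow> real) \<Rightarrow> 'a set \<Rightarrow> 'a set \<Rightarrow> real \<Rightarrow> real" where
  "wavg_char \<mu> u G E s = (wmeas \<mu> u (G \<inter> E) / wmeas \<mu> u E) powr (1 / s)"

definition rh_ineq :: "('a \<Rightarrow> 'a \<Rightarrow> real) \<Rightarrow> 'a measure \<Rightarrow> real \<Rightarrow> real \<Rightarrow> ('a \<Rightarrow> real) \<Rightarrow> real \<Rightarrow> bool" where
  "rh_ineq d \<mu> cd q w C \<longleftrightarrow> (\<forall>x \<rho>. \<rho> > 0 \<longrightarrow>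
     (avg \<mu> (\<lambda>y. w y powr q) (qball d x \<rho>)) powr (1 / q) \<le> C * avg \<mu> w (qball d x (cd * \<rho>)))"

definition in_RH :: "('a \<Rightarrow> 'a \<Rightarrow> real) \<Rightarrow> 'a measure \<Rightarrow> real \<Rightarrow> real \<Rightarrow> ('a \<Rightarrow> real) \<Rightarrow> bool" where
  "in_RH d \<mu> cd q w \<longleftrightarrow> weight d \<mu> w \<and> loc_int d \<mu> (\<lambda>y. w y powr q) \<and> (\<exists>C. rh_ineq d \<mu> cd q w C)"

definition rh_const :: "('a \<Rightarrow> 'a \<Rightarrow> real) \<Rightarrow> 'a measure \<Rightarrow> real \<Rightarrow> real \<Rightarrow> ('a \<Rightarrow> real) \<Rightarrow> real" where
  "rh_const d \<mu> cd q w = Inf {C. 0 \<le> C \<and> rh_ineq d \<mu> cd q w C}"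

section \<open>A_infinity (Fujii--Wilson constant over balls)\<close>

definition maxfun :: "('a \<Rightarrow> 'a \<Rightarrow> real) \<Rightarrow> 'a measure \<Rightarrow> ('a \<Rightarrow> real) \<Rightarrow> 'a \<Rightarrow> ennreal" where
  "maxfun d \<mu> f x = (SUP p\<in>{(z, \<rho>). \<rho> > 0 \<and> x \<in> qball d z \<rho>}.
      (\<integral>\<^sup>+ y\<in>qball d (fst p) (snd p). ennreal \<bar>f y\<bar> \<partial>\<mu>) / emeasure \<mu> (qball d (fst p) (snd p)))"

definition ainf_const_enn :: "('a \<Rightarrow> 'a \<Rightarrow> real) \<Rightarrow> 'a measure \<Rightarrow> ('a \<Rightarrow> real) \<Rightarrow> ennreal" where
  "ainf_const_enn d \<mu> w = (SUP p\<in>{(x, \<rho>). \<rho> > 0}.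
      (\<integral>\<^sup>+ y\<in>qball d (fst p) (snd p).
          maxfun d \<mu> (\<lambda>v. indicator (qball d (fst p) (snd p)) v * w v) y \<partial>\<mu>)
      / (\<integral>\<^sup>+ y\<in>qball d (fst p) (snd p). ennreal (w y) \<partial>\<mu>))"

definition in_Ainf :: "('a \<Rightarrow> 'a \<Rightarrow> real) \<Rightarrow> 'a measure \<Rightarrow> ('a \<Rightarrow> real) \<Rightarrow> bool" where
  "in_Ainf d \<mu> w \<longleftrightarrow> weight d \<mu> w \<and> ainf_const_enn d \<mu> w < \<infinity>"

definition ainf_const :: "('a \<Rightarrow> 'a \<Rightarrow> real) \<Rightarrow> 'a measure \<Rightarrow> ('a \<Rightarrow> real) \<Rightarrow> real" where
  "ainf_const d \<mu> w = enn2real (ainf_const_enn d \<mu> w)"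

definition sharp_RH :: "('a \<Rightarrow> 'a \<Rightarrow> real) \<Rightarrow> 'a measure \<Rightarrow> real \<Rightarrow> real \<Rightarrow> bool" where
  "sharp_RH d \<mu> cd \<tau> \<longleftrightarrow> 0 < \<tau> \<and> (\<exists>C. \<forall>w. in_Ainf d \<mu> w \<longrightarrow>
     (let p = 1 + 1 / (\<tau> * ainf_const d \<mu> w) in
       loc_int d \<mu> (\<lambda>y. w y powr p) \<and>
       (\<forall>x \<rho>. \<rho> > 0 \<longrightarrow>
          (avg \<mu> (\<lambda>y. w y powr p) (qball d x \<rho>)) powr (1 / p) \<le> C * avg \<mu> w (qball d x (cd * \<rho>)))))"

definition young_function :: "(real \<Rightarrow> real) \<Rightarrow> bool" where
  "young_function A \<longleftrightarrow> A 0 = 0 \<and> (\<forall>t\<ge>0. 0 \<le> A t) \<and> convex_on {0..} A \<and>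
     mono_on {0..} A \<and> filterlim A at_top at_top"

text \<open>||g||_{A,E} = inf {lambda > 0 : (1/mu(E)) int_E A(|g|/lambda) \<le> 1} (value \<infinity> if empty)\<close>
definition orlicz_norm :: "'a measure \<Rightarrow> (real \<Rightarrow> real) \<Rightarrow> ('a \<Rightarrow> real) \<Rightarrow> 'a set \<Rightarrow> ennreal" where
  "orlicz_norm \<mu> A g E = (INF lam\<in>{lam::real. 0 < lam \<and>
       (\<integral>\<^sup>+ x\<in>E. ennreal (A (\<bar>g x\<bar> / lam)) \<partial>\<mu>) \<le> emeasure \<mu> E}. ennreal lam)"

definition B_cond :: "(real \<Rightarrow> real) \<Rightarrow> real \<Rightarrow> bool" where
  "B_cond A \<rho> \<longleftrightarrow> (\<integral>\<^sup>+ t\<in>{1..}. ennreal (A t * t powr (- \<rho>) / t) \<partial>lborel) < \<infinity>"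

text \<open>kappa(eps): constants with A(t) \<le> kappa(eps) t^(r(1+eps)) for t \<ge> 1
  (the paper's absolute c absorbed; normalised kappa \<ge> 1).\<close>
definition kappa_fun :: "(real \<Rightarrow> real) \<Rightarrow> real \<Rightarrow> (real \<Rightarrow> real) \<Rightarrow> bool" where
  "kappa_fun A r \<kappa> \<longleftrightarrow> (\<forall>\<epsilon>>0. 1 \<le> \<kappa> \<epsilon> \<and> (\<forall>t\<ge>1. A t \<le> \<kappa> \<epsilon> * t powr (r * (1 + \<epsilon>))))"

end

theory Submission
  imports Defs
begin


lemma young_pt:
  fixes a b x y :: real
  assumes "a > 1" "b > 1" "1/a + 1/b = 1" "x \<ge> 0" "y \<ge> 0"
  shows "x * y \<le> x powr a / a + y powr b / b"
  using Youngs_inequality[OF assms] by simp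

lemma holder:
  fixes f g :: "'a \<Rightarrow> real" and a b :: real
  assumes ab: "a > 1" "b > 1" "1/a + 1/b = 1"
    and fm: "f \<in> borel_measurable N" and gm: "g \<in> borel_measurable N"
    and f0: "\<And>x. 0 \<le> f x" and g0: "\<And>x. 0 \<le> g x"
    and fi: "integrable N (\<lambda>x. f x powr a)" and gi: "integrable N (\<lambda>x. g x powr b)"
  shows "integrable N (\<lambda>x. f x * g x)"
    and "(\<integral>x. f x * g x \<partial>N) \<le> (\<integral>x. f x powr a \<partial>N) powr (1/a) * (\<integral>x. g x powr b \<partial>N) powr (1/b)"
proof -
  have bnd: "integrable N (\<lambda>x. f x powr a / a + g x powr b / b)"
    using fi gi by auto
  show int: "integrable N (\<lambda>x. f x * g x)"
    apply (rule Bochner_Integration.integrable_bound[OF bnd])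
    using fm gm apply measurable
  proof (rule AE_I2)
    fix x
    have "f x * g x \<le> f x powr a / a + g x powr b / b" by (rule young_pt[OF ab f0 g0])
    moreover have "0 \<le> f x * g x" using f0 g0 by simp
    ultimately show "norm (f x * g x) \<le> norm (f x powr a / a + g x powr b / b)" by simp
  qed
  define F where "F = (\<integral>x. f x powr a \<partial>N)"
  define G where "G = (\<integral>x. g x powr b \<partial>N)"
  have F0: "F \<ge> 0" unfolding F_def by (rule integral_nonneg_AE) auto
  have G0: "G \<ge> 0" unfolding G_def by (rule integral_nonneg_AE) auto
  show "(\<integral>x. f x * g x \<partial>N) \<le> F powr (1/a) * G powr (1/b)"
  proof (cases "F = 0 \<or> G = 0")
    case True
    then show ?thesis
    proof
      assume "F = 0"
      then have "AE x in N. f x powr a = 0"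
        using integral_nonneg_eq_0_iff_AE[OF fi] unfolding F_def by auto
      then have "AE x in N. f x * g x = 0" by eventually_elim auto
      then have "(\<integral>x. f x * g x \<partial>N) = 0" by (simp add: integral_eq_zero_AE)
      then show ?thesis by simp
    next
      assume "G = 0"
      then have "AE x in N. g x powr b = 0"
        using integral_nonneg_eq_0_iff_AE[OF gi] unfolding G_def by auto
      then have "AE x in N. f x * g x = 0" by eventually_elim auto
      then have "(\<integral>x. f x * g x \<partial>N) = 0" by (simp add: integral_eq_zero_AE)
      then show ?thesis by simp
    qed
  next
    case False
    then have Fp: "F > 0" and Gp: "G > 0" using F0 G0 by auto
    define cF where "cF = F powr (1/a)"
    define cG where "cG = G powr (1/b)"
    have cFp: "cF > 0" and cGp: "cG > 0" using Fp Gp by (auto simp: cF_def cG_def)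
    have cFa: "cF powr a = F" using Fp ab by (simp add: cF_def powr_powr)
    have cGb: "cG powr b = G" using Gp ab by (simp add: cG_def powr_powr)
    have pt: "f x * g x \<le> cF * cG * (f x powr a / (a * F) + g x powr b / (b * G))" for x
    proof -
      have "(f x / cF) * (g x / cG) \<le> (f x / cF) powr a / a + (g x / cG) powr b / b"
        by (rule young_pt[OF ab]) (use f0 g0 cFp cGp in auto)
      also have "\<dots> = f x powr a / (a * F) + g x powr b / (b * G)"
        using f0[of x] g0[of x] cFp cGp by (simp add: powr_divide cFa cGb mult.commute)
      finally show ?thesis using cFp cGp by (simp add: field_simps)
    qed
    have "(\<integral>x. f x * g x \<partial>N) \<le> (\<integral>x. cF * cG * (f x powr a / (a * F) + g x powr b / (b * G)) \<partial>N)"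
      by (rule integral_mono[OF int]) (use fi gi pt in auto)
    also have "\<dots> = cF * cG * (F / (a * F) + G / (b * G))"
      using fi gi by (simp add: F_def G_def)
    also have "\<dots> = cF * cG" using Fp Gp ab by (simp add: field_simps)
    finally show ?thesis by (simp add: cF_def cG_def)
  qed
qed

lemma powr_int_bound:
  fixes f :: "'a \<Rightarrow> real"
  assumes "finite_measure N" "0 < a" "a \<le> b"
    and fm: "f \<in> borel_measurable N" and f0: "\<And>x. 0 \<le> f x"
    and fi: "integrable N (\<lambda>x. f x powr b)"
  shows "integrable N (\<lambda>x. f x powr a)"
proof -
  interpret finite_measure N by fact
  have bnd: "integrable N (\<lambda>x. 1 + f x powr b)" using fi by simp
  show ?thesis
    apply (rule Bochner_Integration.integrable_bound[OF bnd])
    using fm apply measurable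
  proof (rule AE_I2)
    fix x
    have "f x powr a \<le> 1 + f x powr b"
    proof (cases "f x \<le> 1")
      case True
      then have "f x powr a \<le> 1" using f0[of x] assms(2) by (intro powr_le1) auto
      then show ?thesis using f0[of x] by (smt (verit) powr_ge_zero)
    next
      case False
      then have "f x powr a \<le> f x powr b" using assms(3) by (intro powr_mono) auto
      then show ?thesis by simp
    qed
    then show "norm (f x powr a) \<le> norm (1 + f x powr b)" by simp
  qed
qed

lemma powmean:
  fixes f :: "'a \<Rightarrow> real"
  assumes fin: "finite_measure N" and m0: "0 < measure N (space N)" and ab: "0 < a" "a \<le> b"
    and fm: "f \<in> borel_measurable N" and f0: "\<And>x. 0 \<le> f x"
    and fi: "integrable N (\<lambda>x. f x powr b)"
  shows "((\<integral>x. f x powr a \<partial>N) / measure N (space N)) powr (1/a)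
         \<le> ((\<integral>x. f x powr b \<partial>N) / measure N (space N)) powr (1/b)"
proof (cases "a = b")
  case True then show ?thesis by simp
next
  case False
  interpret finite_measure N by fact
  define m where "m = measure N (space N)"
  have ai: "integrable N (\<lambda>x. f x powr a)" by (rule powr_int_bound[OF fin ab fm f0 fi])
  have lt: "a < b" using ab False by simp
  define \<alpha> where "\<alpha> = b / a"
  define \<beta> where "\<beta> = b / (b - a)"
  have \<alpha>1: "\<alpha> > 1" using lt ab by (simp add: \<alpha>_def)
  have \<beta>1: "\<beta> > 1" using lt ab by (simp add: \<beta>_def)
  have conj: "1/\<alpha> + 1/\<beta> = 1" using lt ab by (simp add: \<alpha>_def \<beta>_def field_simps)
  have e1: "(f x powr a) powr \<alpha> = f x powr b" for x using ab by (simp add: powr_powr \<alpha>_def)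
  have h: "(\<integral>x. f x powr a * 1 \<partial>N) \<le> (\<integral>x. (f x powr a) powr \<alpha> \<partial>N) powr (1/\<alpha>) * (\<integral>x. 1 powr \<beta> \<partial>N) powr (1/\<beta>)"
    by (rule holder(2)[OF \<alpha>1 \<beta>1 conj]) (use fm fi in \<open>auto simp: e1\<close>)
  define I where "I = (\<integral>x. f x powr b \<partial>N)"
  have I0: "I \<ge> 0" unfolding I_def by (rule integral_nonneg_AE) auto
  have "(\<integral>x. f x powr a \<partial>N) \<le> I powr (a/b) * m powr (1 - a/b)"
  proof -
    have "(\<integral>x. f x powr a \<partial>N) \<le> I powr (1/\<alpha>) * m powr (1/\<beta>)"
      using h by (simp add: e1 I_def m_def)
    moreover have "1/\<alpha> = a/b" "1/\<beta> = 1 - a/b" using ab lt by (auto simp: \<alpha>_def \<beta>_def field_simps)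
    ultimately show ?thesis by simp
  qed
  also have "\<dots> = (I / m) powr (a/b) * m"
    using m0 I0 by (simp add: m_def powr_divide powr_diff field_simps)
  finally have "(\<integral>x. f x powr a \<partial>N) / m \<le> (I / m) powr (a / b)"
    using m0 by (simp add: m_def divide_le_eq mult.commute)
  then have "((\<integral>x. f x powr a \<partial>N) / m) powr (1/a) \<le> ((I / m) powr (a / b)) powr (1/a)"
  proof -
    assume le: "(\<integral>x. f x powr a \<partial>N) / m \<le> (I / m) powr (a / b)"
    have nn: "0 \<le> (\<integral>x. f x powr a \<partial>N) / m"
      using m0 by (intro divide_nonneg_nonneg integral_nonneg_AE) (auto simp: m_def)
    show ?thesis by (rule powr_mono2[OF _ nn le]) (use ab in simp)
  qed
  also have "\<dots> = (I/m) powr (1/b)" using ab by (simp add: powr_powr)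
  finally show ?thesis by (simp add: I_def m_def)
qed



lemma rs_int:
  fixes h :: "'a \<Rightarrow> real"
  assumes "B \<in> sets M"
  shows "integrable (restrict_space M B) h \<longleftrightarrow> set_integrable M B h"
proof -
  have "B \<inter> space M \<in> sets M" using assms by auto
  then show ?thesis unfolding set_integrable_def by (rule integrable_restrict_space)
qed

lemma rs_integral:
  fixes h :: "'a \<Rightarrow> real"
  assumes "B \<in> sets M"
  shows "integral\<^sup>L (restrict_space M B) h = set_lebesgue_integral M B h"
proof -
  have "B \<inter> space M \<in> sets M" using assms by auto
  then show ?thesis unfolding set_lebesgue_integral_def by (rule integral_restrict_space)
qed

lemma rs_space: "B \<in> sets M \<Longrightarrow> space (restrict_space M B) = B"
  by (simp add: space_restrict_space2)

lemma rs_measure: "B \<in> sets M \<Longrightarrow> measure (restrict_space M B) (space (restrict_space M B)) = measure M B"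
proof -
  assume B: "B \<in> sets M"
  have "B \<inter> space M \<in> sets M" using B by auto
  then show ?thesis using B by (simp add: space_restrict_space2 measure_restrict_space)
qed

lemma rs_finite: "B \<in> sets M \<Longrightarrow> emeasure M B < \<infinity> \<Longrightarrow> finite_measure (restrict_space M B)"
  by (intro finite_measureI) (simp add: space_restrict_space2 emeasure_restrict_space sets.Int_space_eq2)

lemma rs_meas: "f \<in> borel_measurable M \<Longrightarrow> f \<in> borel_measurable (restrict_space M B)"
  by (rule measurable_restrict_space1)

lemma set_powmean:
  fixes f :: "'a \<Rightarrow> real"
  assumes B: "B \<in> sets M" "emeasure M B < \<infinity>" "0 < measure M B"
    and ab: "0 < a" "a \<le> b" and fm: "f \<in> borel_measurable M" and f0: "\<And>x. 0 \<le> f x"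
    and fi: "set_integrable M B (\<lambda>x. f x powr b)"
  shows "set_integrable M B (\<lambda>x. f x powr a)"
    and "(avg M (\<lambda>x. f x powr a) B) powr (1/a) \<le> (avg M (\<lambda>x. f x powr b) B) powr (1/b)"
proof -
  let ?N = "restrict_space M B"
  have fin: "finite_measure ?N" using rs_finite B by blast
  have fi': "integrable ?N (\<lambda>x. f x powr b)" using fi rs_int[OF B(1)] by blast
  show "set_integrable M B (\<lambda>x. f x powr a)"
    using powr_int_bound[OF fin ab rs_meas[OF fm] f0 fi'] rs_int[OF B(1)] by blast
  show "(avg M (\<lambda>x. f x powr a) B) powr (1/a) \<le> (avg M (\<lambda>x. f x powr b) B) powr (1/b)"
    using powmean[OF fin _ ab rs_meas[OF fm] f0 fi'] B rs_measure[OF B(1)]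
    by (simp add: avg_def wmeas_def rs_integral)
qed

lemma set_holder:
  fixes f g :: "'a \<Rightarrow> real" and a b :: real
  assumes B: "B \<in> sets M" and ab: "a > 1" "b > 1" "1/a + 1/b = 1"
    and fm: "f \<in> borel_measurable M" and gm: "g \<in> borel_measurable M"
    and f0: "\<And>x. 0 \<le> f x" and g0: "\<And>x. 0 \<le> g x"
    and fi: "set_integrable M B (\<lambda>x. f x powr a)" and gi: "set_integrable M B (\<lambda>x. g x powr b)"
  shows "set_integrable M B (\<lambda>x. f x * g x)"
    and "(LINT x:B|M. f x * g x) \<le> (LINT x:B|M. f x powr a) powr (1/a) * (LINT x:B|M. g x powr b) powr (1/b)"
  using holder[OF ab rs_meas[OF fm] rs_meas[OF gm] f0 g0, of B] fi gi
  by (simp_all add: rs_int[OF B] rs_integral[OF B])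

lemma set_integral_nonneg':
  fixes f :: "'a \<Rightarrow> real"
  shows "(\<And>x. 0 \<le> f x) \<Longrightarrow> 0 \<le> (LINT x:B|M. f x)"
  unfolding set_lebesgue_integral_def by (rule integral_nonneg_AE) (auto simp: indicator_def)

lemma set_integral_mono_set':
  fixes f :: "'a \<Rightarrow> real"
  assumes "B \<in> sets M" "B' \<in> sets M" "B \<subseteq> B'" "\<And>x. 0 \<le> f x" "set_integrable M B' f"
  shows "(LINT x:B|M. f x) \<le> (LINT x:B'|M. f x)"
proof -
  have "set_integrable M B f"
    by (rule set_integrable_subset[OF assms(5) assms(1) assms(3)])
  show ?thesis
    unfolding set_lebesgue_integral_def
  proof (rule integral_mono)
    show "integrable M (\<lambda>x. indicat_real B x *\<^sub>R f x)" using \<open>set_integrable M B f\<close> by (simp add: set_integrable_def)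
    show "integrable M (\<lambda>x. indicat_real B' x *\<^sub>R f x)" using assms(5) by (simp add: set_integrable_def)
    fix x assume "x \<in> space M" show "indicat_real B x *\<^sub>R f x \<le> indicat_real B' x *\<^sub>R f x"
      using assms(3) assms(4)[of x] by (auto split: split_indicator)
  qed
qed



lemma young_small:
  assumes yf: "young_function A" and t: "0 \<le> t" "t \<le> 1"
  shows "A t \<le> t * A 1"
proof -
  have cv: "convex_on {0..} A" using yf by (simp add: young_function_def)
  have "A ((1 - t) *\<^sub>R 0 + t *\<^sub>R 1) \<le> (1 - t) * A 0 + t * A 1"
    by (rule convex_onD[OF cv]) (use t in auto)
  then show ?thesis using yf by (simp add: young_function_def)
qed

lemma young_bound:
  assumes yf: "young_function A" and k: "\<forall>t\<ge>1. A t \<le> \<kappa> * t powr p" and t: "0 \<le> t"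
    and p: "p \<ge> 1"
  shows "A t \<le> \<kappa> * t + \<kappa> * t powr p"
proof (cases "t \<le> 1")
  case True
  have k0: "\<kappa> \<ge> 0"
  proof -
    have "0 \<le> A 1" using yf by (simp add: young_function_def)
    also have "\<dots> \<le> \<kappa>" using k by auto
    finally show ?thesis .
  qed
  have "A t \<le> t * A 1" by (rule young_small[OF yf t True])
  also have "\<dots> \<le> t * \<kappa>" using k t by (intro mult_left_mono) auto
  finally have "A t \<le> \<kappa> * t" by (simp add: mult.commute)
  moreover have "0 \<le> \<kappa> * t powr p" using k0 by simp
  ultimately show ?thesis by linarith
next
  case False
  then have "A t \<le> \<kappa> * t powr p" using k by auto
  moreover have "0 \<le> \<kappa>"
  proof -
    have "0 \<le> A 1" using yf by (simp add: young_function_def)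
    also have "\<dots> \<le> \<kappa>" using k by auto
    finally show ?thesis .
  qed
  ultimately show ?thesis using t by (simp add: add_increasing)
qed

lemma orlicz_zero:
  assumes B: "B \<in> sets M" and yf: "young_function A"
    and z: "AE x in M. x \<in> B \<longrightarrow> g x = 0"
  shows "orlicz_norm M A g B = 0"
proof -
  have mem: "orlicz_norm M A g B \<le> ennreal lam" if lam: "lam > 0" for lam
  proof -
    have "(\<integral>\<^sup>+ x\<in>B. ennreal (A (\<bar>g x\<bar> / lam)) \<partial>M) = (\<integral>\<^sup>+ x. 0 \<partial>M)"
      apply (rule nn_integral_cong_AE)
      using z
    proof eventually_elim
      case (elim x)
      show ?case using elim yf by (cases "x \<in> B") (auto simp: young_function_def)
    qed
    then have "(\<integral>\<^sup>+ x\<in>B. ennreal (A (\<bar>g x\<bar> / lam)) \<partial>M) \<le> emeasure M B" by simp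
    then show ?thesis unfolding orlicz_norm_def
      by (intro INF_lower) (use lam in auto)
  qed
  have "orlicz_norm M A g B \<le> 0"
    by (rule ennreal_le_epsilon) (use mem in auto)
  then show ?thesis by simp
qed

lemma set_AE_zero:
  fixes f :: "'a \<Rightarrow> real"
  assumes B: "B \<in> sets M" and f0: "\<And>x. 0 \<le> f x" and fi: "set_integrable M B f"
    and z: "(LINT x:B|M. f x) = 0"
  shows "AE x in M. x \<in> B \<longrightarrow> f x = 0"
proof -
  have Bs: "B \<inter> space M \<in> sets M" using B by auto
  have "integrable (restrict_space M B) f" using fi rs_int[OF B] by blast
  moreover have "integral\<^sup>L (restrict_space M B) f = 0" using z rs_integral[OF B] by simp
  ultimately have "AE x in restrict_space M B. f x = 0"
    using integral_nonneg_eq_0_iff_AE[of "restrict_space M B" f] f0 by auto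
  moreover have "(AE x in restrict_space M B. f x = 0) = (AE x in M. x \<in> B \<longrightarrow> f x = 0)"
    by (rule AE_restrict_space_iff[OF Bs])
  ultimately show ?thesis by simp
qed

lemma orlicz_bound:
  fixes g :: "'a \<Rightarrow> real"
  assumes B: "B \<in> sets M" "emeasure M B < \<infinity>" "0 < measure M B"
    and yf: "young_function A" and k1: "\<kappa> \<ge> 1" and p1: "p \<ge> 1"
    and k: "\<forall>t\<ge>1. A t \<le> \<kappa> * t powr p"
    and gm: "g \<in> borel_measurable M" and g0: "\<And>x. 0 \<le> g x"
    and gi: "set_integrable M B (\<lambda>x. g x powr p)"
  shows "orlicz_norm M A g B \<le> ennreal (2 * \<kappa> * (avg M (\<lambda>x. g x powr p) B) powr (1/p))"
proof -
  define H where "H = avg M (\<lambda>x. g x powr p) B"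
  define m where "m = measure M B"
  have m0: "m > 0" using B by (simp add: m_def)
  have Hdef: "(LINT x:B|M. g x powr p) = m * H" using m0 by (simp add: H_def avg_def wmeas_def m_def)
  have H0: "H \<ge> 0" using m0 by (simp add: H_def avg_def wmeas_def m_def set_integral_nonneg')
  show ?thesis
  proof (cases "H = 0")
    case True
    then have "AE x in M. x \<in> B \<longrightarrow> g x powr p = 0"
      using set_AE_zero[OF B(1) _ gi] Hdef by simp
    then have "AE x in M. x \<in> B \<longrightarrow> g x = 0" by eventually_elim simp
    then have "orlicz_norm M A g B = 0" by (rule orlicz_zero[OF B(1) yf])
    then show ?thesis by simp
  next
    case False
    then have Hp: "H > 0" using H0 by simp
    let ?N = "restrict_space M B"
    have fin: "finite_measure ?N" using rs_finite B by blast
    define lam where "lam = 2 * \<kappa> * H powr (1/p)"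
    have lam0: "lam > 0" using Hp k1 by (simp add: lam_def)
    have gi1: "set_integrable M B (\<lambda>x. g x powr 1)" and
      pm: "(avg M (\<lambda>x. g x powr 1) B) powr (1/1) \<le> (avg M (\<lambda>x. g x powr p) B) powr (1/p)"
      using set_powmean[OF B _ p1 gm g0 gi] by auto
    have g1: "(\<lambda>x. g x powr 1) = g" using g0 by (simp add: fun_eq_iff)
    have gi1': "set_integrable M B g" using gi1 g1 by simp
    have I1: "(LINT x:B|M. g x) \<le> m * H powr (1/p)"
      using pm m0 g1 by (simp add: H_def avg_def wmeas_def m_def divide_le_eq mult.commute)
    have powlam: "lam powr p = (2 * \<kappa>) powr p * H"
      using Hp k1 p1 by (simp add: lam_def powr_mult powr_powr)
    define F where "F = (\<lambda>x. \<kappa> * (g x / lam) + \<kappa> * (g x / lam) powr p)"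
    have F_eq: "F x = (\<kappa> / lam) * g x + (\<kappa> / lam powr p) * g x powr p" for x
      using g0[of x] lam0 by (simp add: F_def powr_divide)
    have Fi: "set_integrable M B F"
      unfolding F_eq using gi1' gi by (intro set_integral_add set_integrable_mult_right) auto
    have FI: "(LINT x:B|M. F x) = (\<kappa> / lam) * (LINT x:B|M. g x) + (\<kappa> / lam powr p) * (LINT x:B|M. g x powr p)"
      unfolding F_eq using gi1' gi by (simp add: set_integral_add set_integrable_mult_right)
    have t1: "(\<kappa> / lam) * (LINT x:B|M. g x) \<le> m / 2"
    proof -
      have "(\<kappa> / lam) * (LINT x:B|M. g x) \<le> (\<kappa> / lam) * (m * H powr (1/p))"
        using I1 k1 lam0 by (intro mult_left_mono) auto
      also have "\<dots> = m / 2" using k1 Hp by (simp add: lam_def field_simps)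
      finally show ?thesis .
    qed
    have t2: "(\<kappa> / lam powr p) * (LINT x:B|M. g x powr p) \<le> m / 2"
    proof -
      have "2 * \<kappa> \<le> (2 * \<kappa>) powr p"
      proof -
        have "(2 * \<kappa>) powr 1 \<le> (2 * \<kappa>) powr p" by (rule powr_mono) (use k1 p1 in auto)
        then show ?thesis using k1 by simp
      qed
      then have "\<kappa> / (2 * \<kappa>) powr p \<le> 1 / 2" using k1 by (simp add: field_simps)
      then have "\<kappa> / (2 * \<kappa>) powr p * m \<le> 1/2 * m" using m0 by (intro mult_right_mono) auto
      then show ?thesis unfolding powlam Hdef using Hp k1 by (simp add: field_simps)
    qed
    have "(\<integral>\<^sup>+ x\<in>B. ennreal (A (\<bar>g x\<bar> / lam)) \<partial>M) \<le> (\<integral>\<^sup>+ x\<in>B. ennreal (F x) \<partial>M)"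
    proof (rule nn_integral_mono)
      fix x
      have "A (\<bar>g x\<bar> / lam) \<le> F x"
        using young_bound[OF yf k _ p1, of "g x / lam"] g0[of x] lam0 by (simp add: F_def)
      then show "ennreal (A (\<bar>g x\<bar> / lam)) * indicator B x \<le> ennreal (F x) * indicator B x"
        by (auto split: split_indicator intro: ennreal_leI)
    qed
    also have "\<dots> = ennreal (LINT x:B|M. F x)"
    proof -
      have F0: "\<And>x. 0 \<le> F x" using g0 lam0 k1 by (simp add: F_def)
      have "integrable M (\<lambda>x. indicator B x *\<^sub>R F x)" using Fi by (simp add: set_integrable_def)
      then have "(\<integral>\<^sup>+ x. ennreal (indicator B x *\<^sub>R F x) \<partial>M) = ennreal (LINT x:B|M. F x)"
        unfolding set_lebesgue_integral_def
        by (rule nn_integral_eq_integral) (use F0 in \<open>auto split: split_indicator\<close>)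
      moreover have "(\<lambda>x. ennreal (indicator B x *\<^sub>R F x)) = (\<lambda>x. ennreal (F x) * indicator B x)"
        by (auto simp: fun_eq_iff split: split_indicator)
      ultimately show ?thesis by simp
    qed
    also have "\<dots> \<le> ennreal m" using FI t1 t2 by (intro ennreal_leI) linarith
    also have "\<dots> = emeasure M B" using B by (simp add: m_def emeasure_eq_ennreal_measure)
    finally have mem: "(\<integral>\<^sup>+ x\<in>B. ennreal (A (\<bar>g x\<bar> / lam)) \<partial>M) \<le> emeasure M B" .
    have "orlicz_norm M A g B \<le> ennreal lam" unfolding orlicz_norm_def
      by (intro INF_lower) (use lam0 mem in auto)
    then show ?thesis by (simp add: lam_def H_def)
  qed
qed



lemma hs_ball_sets: "homogeneous_space d K \<mu> \<Longrightarrow> qball d x \<rho> \<in> sets \<mu>"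
  by (simp add: homogeneous_space_def)

lemma hs_ball_fin: "homogeneous_space d K \<mu> \<Longrightarrow> \<rho> > 0 \<Longrightarrow> emeasure \<mu> (qball d x \<rho>) < \<infinity>"
  by (simp add: homogeneous_space_def)

lemma hs_ball_pos: "homogeneous_space d K \<mu> \<Longrightarrow> \<rho> > 0 \<Longrightarrow> 0 < measure \<mu> (qball d x \<rho>)"
  unfolding homogeneous_space_def
  by (metis emeasure_eq_ennreal_measure ennreal_0 infinity_ennreal_def less_ennreal.rep_eq
      order_less_irrefl top.not_eq_extremum zero_less_measure_iff)

lemma qball_mono: "\<rho>1 \<le> \<rho>2 \<Longrightarrow> qball d x \<rho>1 \<subseteq> qball d x \<rho>2"
  by (auto simp: qball_def)

lemma hs_ball_measure_mono:
  assumes "homogeneous_space d K \<mu>" "0 < \<rho>1" "\<rho>1 \<le> \<rho>2"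
  shows "measure \<mu> (qball d x \<rho>1) \<le> measure \<mu> (qball d x \<rho>2)"
proof (rule measure_mono_fmeasurable)
  show "qball d x \<rho>1 \<subseteq> qball d x \<rho>2" by (rule qball_mono[OF assms(3)])
  show "qball d x \<rho>1 \<in> sets \<mu>" by (rule hs_ball_sets[OF assms(1)])
  show "qball d x \<rho>2 \<in> fmeasurable \<mu>"
    using hs_ball_sets[OF assms(1)] hs_ball_fin[OF assms(1)] assms by (auto simp: fmeasurable_def)
qed

lemma hs_doubling:
  assumes hs: "homogeneous_space d K \<mu>" and cd: "1 \<le> cd"
  shows "\<exists>D\<ge>1. \<forall>x \<rho>. \<rho> > 0 \<longrightarrow> measure \<mu> (qball d x (cd * \<rho>)) \<le> D * measure \<mu> (qball d x \<rho>)"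
proof -
  obtain C where C: "\<And>x \<rho>. \<rho> > 0 \<Longrightarrow> emeasure \<mu> (qball d x (2 * \<rho>)) \<le> ennreal C * emeasure \<mu> (qball d x \<rho>)"
    using hs unfolding homogeneous_space_def by blast
  define C' where "C' = max C 1"
  have C'1: "C' \<ge> 1" by (simp add: C'_def)
  have step: "measure \<mu> (qball d x (2 * \<rho>)) \<le> C' * measure \<mu> (qball d x \<rho>)" if "\<rho> > 0" for x \<rho>
  proof -
    have "ennreal (measure \<mu> (qball d x (2 * \<rho>))) = emeasure \<mu> (qball d x (2 * \<rho>))"
      using hs_ball_fin[OF hs, of "2*\<rho>" x] that by (intro emeasure_eq_ennreal_measure[symmetric]) auto
    also have "\<dots> \<le> ennreal C * emeasure \<mu> (qball d x \<rho>)" by (rule C[OF that])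
    also have "\<dots> \<le> ennreal C' * emeasure \<mu> (qball d x \<rho>)"
      by (intro mult_right_mono ennreal_leI) (auto simp: C'_def)
    also have "\<dots> = ennreal (C' * measure \<mu> (qball d x \<rho>))"
    proof -
      have "emeasure \<mu> (qball d x \<rho>) = ennreal (measure \<mu> (qball d x \<rho>))"
        using hs_ball_fin[OF hs that, of x] by (intro emeasure_eq_ennreal_measure) auto
      then show ?thesis using C'1 by (simp add: ennreal_mult)
    qed
    finally show ?thesis using C'1 by (simp add: ennreal_le_iff)
  qed
  have pow: "measure \<mu> (qball d x (2^n * \<rho>)) \<le> C'^n * measure \<mu> (qball d x \<rho>)" if "\<rho> > 0" for x \<rho> n
  proof (induction n)
    case 0 then show ?case by simp
  next
    case (Suc n)
    have "measure \<mu> (qball d x (2^Suc n * \<rho>)) = measure \<mu> (qball d x (2 * (2^n * \<rho>)))"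
      by (simp add: mult.assoc)
    also have "\<dots> \<le> C' * measure \<mu> (qball d x (2^n * \<rho>))" by (rule step) (use that in simp)
    also have "\<dots> \<le> C' * (C'^n * measure \<mu> (qball d x \<rho>))"
      using Suc C'1 by (intro mult_left_mono) auto
    finally show ?case by (simp add: mult.assoc)
  qed
  obtain n where n: "cd < 2^n" using real_arch_pow[of 2 cd] by auto
  show ?thesis
  proof (intro exI[of _ "C'^n"] conjI allI impI)
    show "1 \<le> C'^n" using C'1 by simp
    fix x \<rho>
    assume r: "(\<rho>::real) > 0"
    have "measure \<mu> (qball d x (cd * \<rho>)) \<le> measure \<mu> (qball d x (2^n * \<rho>))"
      by (rule hs_ball_measure_mono[OF hs]) (use r cd n in auto)
    also have "\<dots> \<le> C'^n * measure \<mu> (qball d x \<rho>)" by (rule pow[OF r])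
    finally show "measure \<mu> (qball d x (cd * \<rho>)) \<le> C'^n * measure \<mu> (qball d x \<rho>)" .
  qed
qed



lemma avg_nonneg: "(\<And>x. 0 \<le> f x) \<Longrightarrow> 0 \<le> avg M f B"
  by (simp add: avg_def wmeas_def set_integral_nonneg')

lemma rh_const_ok:
  assumes rh: "in_RH d \<mu> cd q u"
  shows "rh_ineq d \<mu> cd q u (rh_const d \<mu> cd q u)" and "0 \<le> rh_const d \<mu> cd q u"
proof -
  define S where "S = {C. 0 \<le> C \<and> rh_ineq d \<mu> cd q u C}"
  have u0: "\<And>x. 0 \<le> u x" using rh by (simp add: in_RH_def weight_def)
  obtain C where C: "rh_ineq d \<mu> cd q u C" using rh by (auto simp: in_RH_def)
  have "rh_ineq d \<mu> cd q u (max C 0)"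
    unfolding rh_ineq_def
  proof (intro allI impI)
    fix x \<rho>
    assume r: "(\<rho>::real) > 0"
    have "(avg \<mu> (\<lambda>y. u y powr q) (qball d x \<rho>)) powr (1 / q) \<le> C * avg \<mu> u (qball d x (cd * \<rho>))"
      using C r by (simp add: rh_ineq_def)
    also have "\<dots> \<le> max C 0 * avg \<mu> u (qball d x (cd * \<rho>))"
      by (intro mult_right_mono avg_nonneg u0) simp
    finally show "(avg \<mu> (\<lambda>y. u y powr q) (qball d x \<rho>)) powr (1 / q) \<le> max C 0 * avg \<mu> u (qball d x (cd * \<rho>))" .
  qed
  then have ne: "max C 0 \<in> S" by (simp add: S_def)
  have bdd: "bdd_below S" by (rule bdd_belowI[of _ 0]) (simp add: S_def)
  have RS: "rh_const d \<mu> cd q u = Inf S" by (simp add: rh_const_def S_def)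
  show "0 \<le> rh_const d \<mu> cd q u"
    unfolding RS
  proof (rule cInf_greatest)
    show "S \<noteq> {}" using ne by blast
    fix x assume "x \<in> S" then show "0 \<le> x" by (simp add: S_def)
  qed
  show "rh_ineq d \<mu> cd q u (rh_const d \<mu> cd q u)"
    unfolding rh_ineq_def
  proof (intro allI impI)
    fix x \<rho>
    assume r: "(\<rho>::real) > 0"
    define L where "L = (avg \<mu> (\<lambda>y. u y powr q) (qball d x \<rho>)) powr (1 / q)"
    define a where "a = avg \<mu> u (qball d x (cd * \<rho>))"
    have a0: "0 \<le> a" unfolding a_def by (intro avg_nonneg u0)
    have all: "L \<le> C' * a" if "C' \<in> S" for C'
      using that r by (simp add: S_def rh_ineq_def L_def a_def)
    have "L \<le> Inf S * a"
    proof (cases "a = 0")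
      case True
      then show ?thesis using all[OF ne] by simp
    next
      case False
      then have ap: "a > 0" using a0 by simp
      have "L / a \<le> Inf S"
        by (rule cInf_greatest) (use ne all ap in \<open>auto simp: divide_le_eq\<close>)
      then show ?thesis using ap by (simp add: divide_le_eq)
    qed
    then show "(avg \<mu> (\<lambda>y. u y powr q) (qball d x \<rho>)) powr (1 / q) \<le> rh_const d \<mu> cd q u * avg \<mu> u (qball d x (cd * \<rho>))"
      by (simp add: L_def a_def rh_const_def S_def)
  qed
qed

lemma ainf_ge1:
  assumes hs: "homogeneous_space d K \<mu>" and wm: "w \<in> borel_measurable \<mu>" and w0: "\<And>x. 0 \<le> w x"
    and r: "\<rho> > 0"
    and X: "0 < (\<integral>\<^sup>+ y\<in>qball d x \<rho>. ennreal (w y) \<partial>\<mu>)" "(\<integral>\<^sup>+ y\<in>qball d x \<rho>. ennreal (w y) \<partial>\<mu>) < \<infinity>"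
  shows "1 \<le> ainf_const_enn d \<mu> w"
proof -
  define B where "B = qball d x \<rho>"
  define X where "X = (\<integral>\<^sup>+ y\<in>B. ennreal (w y) \<partial>\<mu>)"
  have Bs: "B \<in> sets \<mu>" unfolding B_def by (rule hs_ball_sets[OF hs])
  have Bf: "emeasure \<mu> B < \<infinity>" unfolding B_def by (rule hs_ball_fin[OF hs r])
  have Bp: "0 < emeasure \<mu> B"
  proof -
    have "emeasure \<mu> B = ennreal (measure \<mu> B)" using Bf by (intro emeasure_eq_ennreal_measure) auto
    then show ?thesis using hs_ball_pos[OF hs r, of x] by (simp add: B_def)
  qed
  have Xp: "0 < X" "X < \<infinity>" using X by (auto simp: X_def B_def)
  have Xeq: "(\<integral>\<^sup>+ y\<in>B. ennreal \<bar>indicator B y * w y\<bar> \<partial>\<mu>) = X"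
    unfolding X_def by (rule nn_integral_cong) (auto split: split_indicator simp: w0 abs_of_nonneg)
  have mf: "X / emeasure \<mu> B \<le> maxfun d \<mu> (\<lambda>v. indicator B v * w v) y" if "y \<in> B" for y
    unfolding maxfun_def
  proof -
    have "(x, \<rho>) \<in> {(z, \<rho>). \<rho> > 0 \<and> y \<in> qball d z \<rho>}" using that r by (simp add: B_def)
    then have "(\<lambda>p. (\<integral>\<^sup>+ y\<in>qball d (fst p) (snd p). ennreal \<bar>indicator B y * w y\<bar> \<partial>\<mu>) / emeasure \<mu> (qball d (fst p) (snd p))) (x, \<rho>)
      \<le> (SUP p\<in>{(z, \<rho>). \<rho> > 0 \<and> y \<in> qball d z \<rho>}. (\<integral>\<^sup>+ y\<in>qball d (fst p) (snd p). ennreal \<bar>indicator B y * w y\<bar> \<partial>\<mu>) / emeasure \<mu> (qball d (fst p) (snd p)))"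
      by (rule SUP_upper)
    then show "X / emeasure \<mu> B \<le> (SUP p\<in>{(z, \<rho>). \<rho> > 0 \<and> y \<in> qball d z \<rho>}. (\<integral>\<^sup>+ y\<in>qball d (fst p) (snd p). ennreal \<bar>indicator B y * w y\<bar> \<partial>\<mu>) / emeasure \<mu> (qball d (fst p) (snd p)))"
      using Xeq by (simp add: B_def)
  qed
  have num: "X \<le> (\<integral>\<^sup>+ y\<in>B. maxfun d \<mu> (\<lambda>v. indicator B v * w v) y \<partial>\<mu>)"
  proof -
    have "X = (X / emeasure \<mu> B) * emeasure \<mu> B"
      using Bp Bf by (simp add: ennreal_divide_times)
    also have "\<dots> = (\<integral>\<^sup>+ y. (X / emeasure \<mu> B) * indicator B y \<partial>\<mu>)"
      by (simp add: nn_integral_cmult_indicator Bs)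
    also have "\<dots> \<le> (\<integral>\<^sup>+ y\<in>B. maxfun d \<mu> (\<lambda>v. indicator B v * w v) y \<partial>\<mu>)"
      by (intro nn_integral_mono) (auto split: split_indicator intro: mf)
    finally show ?thesis .
  qed
  have "1 = X / X" using Xp by simp
  also have "\<dots> \<le> (\<integral>\<^sup>+ y\<in>B. maxfun d \<mu> (\<lambda>v. indicator B v * w v) y \<partial>\<mu>) / X"
    by (rule divide_right_mono_ennreal[OF num])
  also have "\<dots> \<le> ainf_const_enn d \<mu> w"
    unfolding ainf_const_enn_def
  proof -
    have "(x, \<rho>) \<in> {(x, \<rho>). (\<rho>::real) > 0}" using r by simp
    then have "(\<lambda>p. (\<integral>\<^sup>+ y\<in>qball d (fst p) (snd p).
          maxfun d \<mu> (\<lambda>v. indicator (qball d (fst p) (snd p)) v * w v) y \<partial>\<mu>)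
      / (\<integral>\<^sup>+ y\<in>qball d (fst p) (snd p). ennreal (w y) \<partial>\<mu>)) (x, \<rho>) \<le>
      (SUP p\<in>{(x, \<rho>). (\<rho>::real) > 0}. (\<integral>\<^sup>+ y\<in>qball d (fst p) (snd p).
          maxfun d \<mu> (\<lambda>v. indicator (qball d (fst p) (snd p)) v * w v) y \<partial>\<mu>)
      / (\<integral>\<^sup>+ y\<in>qball d (fst p) (snd p). ennreal (w y) \<partial>\<mu>))"
      by (rule SUP_upper)
    then show "(\<integral>\<^sup>+ y\<in>B. maxfun d \<mu> (\<lambda>v. indicator B v * w v) y \<partial>\<mu>) / X \<le>
      (SUP p\<in>{(x, \<rho>). (\<rho>::real) > 0}. (\<integral>\<^sup>+ y\<in>qball d (fst p) (snd p).
          maxfun d \<mu> (\<lambda>v. indicator (qball d (fst p) (snd p)) v * w v) y \<partial>\<mu>)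
      / (\<integral>\<^sup>+ y\<in>qball d (fst p) (snd p). ennreal (w y) \<partial>\<mu>))"
      by (simp add: B_def X_def)
  qed
  finally show ?thesis .
qed



lemma gm_mono:
  fixes x y x' y' \<theta> :: real
  assumes "0 \<le> \<theta>" "\<theta> \<le> 1" "0 \<le> x" "x \<le> x'" "0 \<le> y" "y \<le> y'"
  shows "x powr \<theta> * y powr (1 - \<theta>) \<le> x' powr \<theta> * y' powr (1 - \<theta>)"
  using assms by (intro mult_mono powr_mono2) auto

lemma gm_same:
  fixes M \<theta> :: real
  assumes "0 \<le> M"
  shows "M powr \<theta> * M powr (1 - \<theta>) = M"
proof (cases "M = 0")
  case False
  have "M powr \<theta> * M powr (1 - \<theta>) = M powr (\<theta> + (1 - \<theta>))" by (simp only: powr_add)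
  also have "\<dots> = M powr 1" by simp
  also have "\<dots> = M" using assms by simp
  finally show ?thesis .
qed simp

lemma final_alg:
  fixes \<kappa> D Cs Ku W a1 a3 Z T b \<theta> e :: real
  assumes th: "0 < \<theta>" "\<theta> \<le> 1" and e: "1 \<le> e" "e \<le> 2" and D: "D \<ge> 1" and Cs: "Cs \<ge> 1"
    and Ku: "Ku \<ge> 0" and k: "\<kappa> \<ge> 0" and W: "W \<ge> 0"
    and Z: "0 \<le> Z" "Z \<le> W * (D * a1)" and T: "0 \<le> T" "T \<le> Cs * Ku * b"
    and a: "0 \<le> a1" "0 \<le> b" "0 \<le> a3"
    and c1: "a1 \<le> D^2 * a3" "b \<le> D^2 * a3" and c2: "Ku < 1 \<Longrightarrow> a1 \<le> Ku^2 * a3" "Ku < 1 \<Longrightarrow> b \<le> Ku * a3"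
  shows "2 * \<kappa> * (Z powr \<theta> * T powr (1 - \<theta>)) \<le> (2 * D^3 * Cs) * \<kappa> * Ku powr e * a3 * W powr \<theta>"
proof -
  define M where "M = D^3 * Cs * Ku powr e * a3"
  have M0: "0 \<le> M" using D Cs a by (simp add: M_def)
  have XM: "D * a1 \<le> M" and YM: "Cs * Ku * b \<le> M"
  proof -
    have "D * a1 \<le> M \<and> Cs * Ku * b \<le> M"
    proof (cases "Ku \<ge> 1")
      case True
      have ke: "Ku \<le> Ku powr e" using powr_mono[OF e(1) True] True by simp
      have k1: "1 \<le> Ku powr e" using ke True by simp
      have "D * a1 \<le> D * (D^2 * a3)" using c1 D by (intro mult_left_mono) auto
      also have "\<dots> = D^3 * 1 * 1 * a3" by (simp add: power3_eq_cube power2_eq_square)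
      also have "\<dots> \<le> M" unfolding M_def using Cs k1 D a
        by (intro mult_right_mono mult_mono) auto
      finally have 1: "D * a1 \<le> M" .
      have "Cs * Ku * b \<le> Cs * Ku * (D^2 * a3)" using c1 Cs Ku by (intro mult_left_mono) auto
      also have "\<dots> = D^2 * Cs * Ku * a3" by simp
      also have "\<dots> \<le> D^3 * Cs * Ku powr e * a3"
      proof -
        have "D^2 \<le> D^3" using D by (simp add: power_increasing)
        then show ?thesis using ke Cs Ku a D by (intro mult_right_mono mult_mono) auto
      qed
      finally have 2: "Cs * Ku * b \<le> M" by (simp add: M_def)
      show ?thesis using 1 2 by simp
    next
      case False
      have k2: "Ku^2 \<le> Ku powr e"
      proof (cases "Ku = 0")
        case True then show ?thesis by simp
      next
        case nz: False
        have "Ku powr 2 \<le> Ku powr e" by (rule powr_mono') (use e Ku False in auto)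
        moreover have "Ku powr 2 = Ku^2" using Ku nz powr_realpow[of Ku 2] by simp
        ultimately show ?thesis by simp
      qed
      have "D * a1 \<le> D * (Ku^2 * a3)" using c2 D False by (intro mult_left_mono) auto
      also have "\<dots> \<le> D^3 * Cs * Ku^2 * a3"
      proof -
        have "D \<le> D^3" using D power_increasing[of 1 3 D] by simp
        also have "\<dots> \<le> D^3 * Cs" using D Cs by simp
        finally have "D \<le> D^3 * Cs" .
        then have "D * (Ku^2 * a3) \<le> (D^3 * Cs) * (Ku^2 * a3)"
          using Ku a by (intro mult_right_mono) auto
        then show ?thesis by (simp add: mult.assoc)
      qed
      also have "\<dots> \<le> M" unfolding M_def using k2 D Cs a
        by (intro mult_right_mono mult_left_mono) auto
      finally have 1: "D * a1 \<le> M" .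
      have "Cs * Ku * b \<le> Cs * Ku * (Ku * a3)" using c2 Cs Ku False by (intro mult_left_mono) auto
      also have "\<dots> = Cs * Ku^2 * a3" by (simp add: power2_eq_square)
      also have "\<dots> \<le> D^3 * Cs * Ku^2 * a3"
      proof -
        have "1 \<le> D^3" using D by simp
        then have "1 * (Cs * Ku^2 * a3) \<le> D^3 * (Cs * Ku^2 * a3)"
          using Cs Ku a by (intro mult_right_mono) auto
        then show ?thesis by (simp add: mult.assoc)
      qed
      also have "\<dots> \<le> M" unfolding M_def using k2 D Cs a
        by (intro mult_right_mono mult_left_mono) auto
      finally have 2: "Cs * Ku * b \<le> M" .
      show ?thesis using 1 2 by simp
    qed
    then show "D * a1 \<le> M" "Cs * Ku * b \<le> M" by auto
  qed
  have "Z powr \<theta> * T powr (1 - \<theta>) \<le> (W * (D * a1)) powr \<theta> * (Cs * Ku * b) powr (1 - \<theta>)"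
    by (rule gm_mono) (use th Z T in auto)
  also have "\<dots> = W powr \<theta> * ((D * a1) powr \<theta> * (Cs * Ku * b) powr (1 - \<theta>))"
    using W D a by (simp add: powr_mult)
  also have "\<dots> \<le> W powr \<theta> * (M powr \<theta> * M powr (1 - \<theta>))"
    by (intro mult_left_mono gm_mono) (use th XM YM D a Cs Ku in auto)
  also have "\<dots> = W powr \<theta> * M" by (simp add: gm_same[OF M0])
  finally have "Z powr \<theta> * T powr (1 - \<theta>) \<le> W powr \<theta> * M" .
  then have "2 * \<kappa> * (Z powr \<theta> * T powr (1 - \<theta>)) \<le> 2 * \<kappa> * (W powr \<theta> * M)"
    using k by (intro mult_left_mono) auto
  then show ?thesis by (simp add: M_def mult_ac)
qed



lemma holder_step:
  fixes g u :: "'a \<Rightarrow> real"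
  assumes B: "B \<in> sets M" "emeasure M B < \<infinity>" "0 < measure M B"
    and gm: "g \<in> borel_measurable M" and um: "u \<in> borel_measurable M"
    and g0: "\<And>x. 0 \<le> g x" and gu: "\<And>x. g x \<le> u x"
    and p: "p \<ge> 1" and mdef: "m = (4 * p - 1) / 3"
    and ui: "set_integrable M B (\<lambda>x. u x powr m)"
  shows "(avg M (\<lambda>x. g x powr p) B) powr (1/p)
     \<le> (avg M g B) powr (1/(4*p)) * ((avg M (\<lambda>x. u x powr m) B) powr (1/m)) powr (1 - 1/(4*p))"
proof -
  note gm[measurable] um[measurable] B(1)[measurable]
  have u0: "\<And>x. 0 \<le> u x" using g0 gu order_trans by blast
  have m1: "m \<ge> 1" using p mdef by simp
  have gmi: "set_integrable M B (\<lambda>x. g x powr m)"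
  proof (rule set_integrable_bound[OF ui])
    show "set_borel_measurable M B (\<lambda>x. g x powr m)" unfolding set_borel_measurable_def by measurable
    show "AE x in M. x \<in> B \<longrightarrow> norm (g x powr m) \<le> norm (u x powr m)"
      using g0 gu u0 m1 by (auto intro!: AE_I2 powr_mono2)
  qed
  have gi1: "set_integrable M B (\<lambda>x. g x powr 1)"
    using set_powmean(1)[OF B _ m1 gm g0 gmi] by simp
  have g1: "(\<lambda>x. g x powr 1) = g" using g0 by (simp add: fun_eq_iff)
  have gi: "set_integrable M B g" using gi1 g1 by simp
  define f1 where "f1 = (\<lambda>x. g x powr (1/4))"
  define f2 where "f2 = (\<lambda>x. g x powr (p - 1/4))"
  have e1: "f1 x powr 4 = g x" for x using g0[of x] by (simp add: f1_def powr_powr)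
  have e2: "f2 x powr (4/3) = g x powr m" for x
  proof -
    have "(p - 1/4) * (4/3) = m" by (simp add: mdef field_simps)
    then show ?thesis by (simp add: f2_def powr_powr)
  qed
  have e3: "f1 x * f2 x = g x powr p" for x by (simp add: f1_def f2_def flip: powr_add)
  have h: "(LINT x:B|M. f1 x * f2 x) \<le> (LINT x:B|M. f1 x powr 4) powr (1/4) * (LINT x:B|M. f2 x powr (4/3)) powr (1/(4/3))"
  proof -
    have fi1: "set_integrable M B (\<lambda>x. f1 x powr 4)" using gi by (simp add: e1)
    have fi2: "set_integrable M B (\<lambda>x. f2 x powr (4/3))" using gmi by (simp add: e2)
    have m1: "f1 \<in> borel_measurable M" "f2 \<in> borel_measurable M" unfolding f1_def f2_def by measurable
    show ?thesis by (rule set_holder(2)[OF B(1) _ _ _ m1 _ _ fi1 fi2]) (auto simp: f1_def f2_def)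
  qed
  define mm where "mm = measure M B"
  define Ig where "Ig = (LINT x:B|M. g x)"
  define Igm where "Igm = (LINT x:B|M. g x powr m)"
  define Im where "Im = (LINT x:B|M. u x powr m)"
  define Ip where "Ip = (LINT x:B|M. g x powr p)"
  have mm0: "mm > 0" using B by (simp add: mm_def)
  have Ig0: "Ig \<ge> 0" unfolding Ig_def by (rule set_integral_nonneg') (rule g0)
  have Igm0: "Igm \<ge> 0" unfolding Igm_def by (rule set_integral_nonneg') (simp)
  have Ip0: "Ip \<ge> 0" unfolding Ip_def by (rule set_integral_nonneg') (simp)
  have IgmIm: "Igm \<le> Im" unfolding Igm_def Im_def
    unfolding set_lebesgue_integral_def
  proof (rule integral_mono)
    show "integrable M (\<lambda>x. indicat_real B x *\<^sub>R g x powr m)" using gmi by (simp add: set_integrable_def)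
    show "integrable M (\<lambda>x. indicat_real B x *\<^sub>R u x powr m)" using ui by (simp add: set_integrable_def)
    fix x show "indicat_real B x *\<^sub>R g x powr m \<le> indicat_real B x *\<^sub>R u x powr m"
      using g0[of x] gu[of x] m1 by (auto split: split_indicator intro: powr_mono2)
  qed
  have "Ip \<le> Ig powr (1/4) * Igm powr (3/4)"
    using h by (simp add: e1 e2 e3 Ip_def Ig_def Igm_def)
  also have "\<dots> \<le> Ig powr (1/4) * Im powr (3/4)"
    using IgmIm Igm0 Ig0 by (intro mult_left_mono powr_mono2) auto
  finally have I1: "Ip \<le> Ig powr (1/4) * Im powr (3/4)" .
  have Im0: "Im \<ge> 0" using IgmIm Igm0 by simp
  have "Ip / mm \<le> (Ig powr (1/4) * Im powr (3/4)) / mm"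
    using I1 mm0 by (simp add: divide_right_mono)
  also have "\<dots> = (Ig / mm) powr (1/4) * (Im / mm) powr (3/4)"
  proof -
    have "mm powr (1/4) * mm powr (3/4) = mm" using mm0 by (simp flip: powr_add)
    then show ?thesis using mm0 Ig0 Im0 by (simp add: powr_divide field_simps)
  qed
  finally have I2: "Ip / mm \<le> (Ig / mm) powr (1/4) * (Im / mm) powr (3/4)" .
  have "(Ip / mm) powr (1/p) \<le> ((Ig / mm) powr (1/4) * (Im / mm) powr (3/4)) powr (1/p)"
    by (rule powr_mono2) (use I2 Ip0 mm0 p in auto)
  also have "\<dots> = (Ig / mm) powr (1/(4*p)) * (Im / mm) powr (3/(4*p))"
    using Ig0 Im0 mm0 by (simp add: powr_mult powr_powr)
  also have "(Im / mm) powr (3/(4*p)) = ((Im / mm) powr (1/m)) powr (1 - 1/(4*p))"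
  proof -
    have "1/m * (1 - 1/(4*p)) = 3/(4*p)" using p by (simp add: mdef field_simps)
    then show ?thesis by (simp add: powr_powr)
  qed
  finally show ?thesis by (simp add: avg_def wmeas_def Ip_def Ig_def Im_def mm_def)
qed



lemma main_est:
  fixes d :: "'a \<Rightarrow> 'a \<Rightarrow> real" and \<mu> :: "'a measure" and u :: "'a \<Rightarrow> real"
    and z :: "int \<Rightarrow> 'i \<Rightarrow> 'a"
  assumes hs: "homogeneous_space d K \<mu>"
    and dy: "dyadic_system d \<mu> c0 C0 \<delta> J Q z" and cd: "1 \<le> cd"
    and D1: "D \<ge> 1" and Dd: "\<forall>x \<rho>. \<rho> > 0 \<longrightarrow> measure \<mu> (qball d x (cd * \<rho>)) \<le> D * measure \<mu> (qball d x \<rho>)"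
    and \<tau>0: "\<tau> > 0" and Cs1: "Cs \<ge> 1"
    and CsP: "\<forall>w. in_Ainf d \<mu> w \<longrightarrow> (let P = 1 + 1 / (\<tau> * ainf_const d \<mu> w) in
       loc_int d \<mu> (\<lambda>y. w y powr P) \<and>
       (\<forall>x \<rho>. \<rho> > 0 \<longrightarrow>
          (avg \<mu> (\<lambda>y. w y powr P) (qball d x \<rho>)) powr (1 / P) \<le> Cs * avg \<mu> w (qball d x (cd * \<rho>))))"
    and r1: "1 \<le> r" and yf: "young_function A" and kf: "kappa_fun A r \<kappa>"
    and rh: "in_RH d \<mu> cd (2 * r - 1) u" and ai: "in_Ainf d \<mu> (\<lambda>x. u x powr r)"
    and G: "G \<in> sets \<mu>"
    and qd: "q = 2 * r - 1" and \<epsilon>d: "\<epsilon> = 1 / (2 * \<tau> * ainf_const d \<mu> (\<lambda>x. u x powr r))"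
    and sd: "s = 4 * (1 + \<epsilon>) * r"
  shows "orlicz_norm \<mu> A (\<lambda>x. indicator G x * u x) (dil_cube d C0 \<delta> z 1 k j)
         \<le> ennreal (2 * D^3 * Cs * \<kappa> \<epsilon> * rh_const d \<mu> cd q u powr (1 + q / (4 * r))
                    * avg \<mu> u (dil_cube d C0 \<delta> z (cd ^ 3) k j)
                    * wavg_char \<mu> u G (dil_cube d C0 \<delta> z cd k j) s)"
proof -
  have R0: "C0 * \<delta> powr real_of_int k > 0" using dy by (simp add: dyadic_system_def)
  define x0 where "x0 = z k j"
  define rad where "rad = (\<lambda>i::nat. cd^i * C0 * \<delta> powr real_of_int k)"
  define B where "B = (\<lambda>i. qball d x0 (rad i))"
  have rad0: "rad i > 0" for i using R0 cd by (simp add: rad_def mult.assoc)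
  have radS: "cd * rad i = rad (Suc i)" for i by (simp add: rad_def mult.assoc)
  have Bdil: "dil_cube d C0 \<delta> z (cd^i) k j = B i" for i by (simp add: dil_cube_def B_def rad_def x0_def)
  have B0dil: "dil_cube d C0 \<delta> z 1 k j = B 0" using Bdil[of 0] by simp
  have B1dil: "dil_cube d C0 \<delta> z cd k j = B 1" using Bdil[of 1] by simp
  have Bs: "B i \<in> sets \<mu>" for i unfolding B_def by (rule hs_ball_sets[OF hs])
  have Bf: "emeasure \<mu> (B i) < \<infinity>" for i unfolding B_def by (rule hs_ball_fin[OF hs rad0])
  have Bp: "0 < measure \<mu> (B i)" for i unfolding B_def by (rule hs_ball_pos[OF hs rad0])
  have BD: "measure \<mu> (B (Suc i)) \<le> D * measure \<mu> (B i)" for i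
    using Dd rad0[of i] unfolding B_def radS[symmetric] by blast
  have Bsub: "B i \<subseteq> B (Suc i)" for i
    unfolding B_def radS[symmetric] using cd rad0[of i] by (intro qball_mono) (simp add: mult_le_cancel_right1)
  have BS: "qball d x0 (cd * rad i) = B (Suc i)" for i by (simp add: B_def radS)
  have um: "u \<in> borel_measurable \<mu>" and u0: "\<And>x. 0 \<le> u x" and uloc: "loc_int d \<mu> u"
    using rh by (auto simp: in_RH_def weight_def)
  have uqloc: "loc_int d \<mu> (\<lambda>y. u y powr q)" using rh qd by (simp add: in_RH_def)
  have q1: "q \<ge> 1" using r1 qd by simp
  have rq: "r \<le> q" using r1 qd by simp
  have ui: "set_integrable \<mu> (B i) u" for i using uloc rad0 by (simp add: loc_int_def B_def)
  have uqi: "set_integrable \<mu> (B i) (\<lambda>y. u y powr q)" for i using uqloc rad0 by (simp add: loc_int_def B_def)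
  define Ku where "Ku = rh_const d \<mu> cd q u"
  have Ku0: "Ku \<ge> 0" using rh_const_ok(2)[OF rh] by (simp add: Ku_def qd)
  have RHi: "(avg \<mu> (\<lambda>y. u y powr q) (B i)) powr (1/q) \<le> Ku * avg \<mu> u (B (Suc i))" for i
  proof -
    have "\<forall>x \<rho>. 0 < \<rho> \<longrightarrow> avg \<mu> (\<lambda>y. u y powr q) (qball d x \<rho>) powr (1 / q)
            \<le> Ku * avg \<mu> u (qball d x (cd * \<rho>))"
      using rh_const_ok(1)[OF rh] unfolding rh_ineq_def Ku_def qd[symmetric] by blast
    then have "avg \<mu> (\<lambda>y. u y powr q) (qball d x0 (rad i)) powr (1 / q)
            \<le> Ku * avg \<mu> u (qball d x0 (cd * rad i))" using rad0[of i] by blast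
    then show ?thesis by (simp add: B_def radS)
  qed
  define a where "a = (\<lambda>i. avg \<mu> u (B i))"
  have a0: "a i \<ge> 0" for i unfolding a_def by (rule avg_nonneg[OF u0])
  have u1: "(\<lambda>x. u x powr 1) = u" using u0 by (simp add: fun_eq_iff)
  have Jq: "a i \<le> (avg \<mu> (\<lambda>y. u y powr q) (B i)) powr (1/q)" for i
    using set_powmean(2)[OF Bs[of i] Bf[of i] Bp[of i] _ q1 um u0 uqi[of i]] avg_nonneg[OF u0, where M=\<mu> and B="B i"] unfolding u1 by (simp add: a_def)
  have aK: "a i \<le> Ku * a (Suc i)" for i using Jq[of i] RHi[of i] by (simp add: a_def)
  have aD: "a i \<le> D * a (Suc i)" for i
  proof -
    have U: "wmeas \<mu> u (B i) \<le> wmeas \<mu> u (B (Suc i))"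
      unfolding wmeas_def by (rule set_integral_mono_set'[OF Bs Bs Bsub u0 ui])
    have U0: "0 \<le> wmeas \<mu> u (B i)" unfolding wmeas_def by (rule set_integral_nonneg'[OF u0])
    have "a i = wmeas \<mu> u (B i) / measure \<mu> (B i)" by (simp add: a_def avg_def)
    also have "\<dots> \<le> wmeas \<mu> u (B (Suc i)) / measure \<mu> (B i)"
      using U Bp[of i] by (simp add: divide_right_mono)
    also have "\<dots> \<le> wmeas \<mu> u (B (Suc i)) / (measure \<mu> (B (Suc i)) / D)"
    proof (rule divide_left_mono)
      show "0 \<le> wmeas \<mu> u (B (Suc i))" unfolding wmeas_def by (rule set_integral_nonneg'[OF u0])
      show "measure \<mu> (B (Suc i)) / D \<le> measure \<mu> (B i)" using BD[of i] D1 by (simp add: divide_le_eq mult.commute)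
      show "0 < measure \<mu> (B i) * (measure \<mu> (B (Suc i)) / D)" using Bp D1 by simp
    qed
    also have "\<dots> = D * a (Suc i)" using D1 Bp[of "Suc i"] by (simp add: a_def avg_def field_simps)
    finally show ?thesis .
  qed
  define g where "g = (\<lambda>x. indicator G x * u x)"
  have gm: "g \<in> borel_measurable \<mu>" unfolding g_def using um G by measurable
  have g0: "\<And>x. 0 \<le> g x" using u0 by (simp add: g_def)
  have gu: "\<And>x. g x \<le> u x" using u0 by (simp add: g_def indicator_def)
  show ?thesis
  proof (cases "AE x in \<mu>. x \<in> B 0 \<longrightarrow> u x = 0")
    case True
    then have "AE x in \<mu>. x \<in> B 0 \<longrightarrow> g x = 0" by eventually_elim (simp add: g_def)
    then have "orlicz_norm \<mu> A g (B 0) = 0" by (rule orlicz_zero[OF Bs yf])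
    then show ?thesis by (simp add: B0dil g_def)
  next
    case nz: False
    define w where "w = (\<lambda>x. u x powr r)"
    have wm: "w \<in> borel_measurable \<mu>" and w0: "\<And>x. 0 \<le> w x" and wloc: "loc_int d \<mu> w"
      using ai by (auto simp: in_Ainf_def weight_def w_def)
    have wi: "set_integrable \<mu> (B i) w" for i using wloc rad0 by (simp add: loc_int_def B_def)
    define X where "X = (\<integral>\<^sup>+ y\<in>B 0. ennreal (w y) \<partial>\<mu>)"
    have Xf: "X < \<infinity>"
    proof -
      have "integrable \<mu> (\<lambda>x. indicator (B 0) x *\<^sub>R w x)" using wi[of 0] by (simp add: set_integrable_def)
      then have "(\<integral>\<^sup>+ x. ennreal (indicator (B 0) x *\<^sub>R w x) \<partial>\<mu>) \<noteq> \<infinity>" by (rule integrableD(2))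
      moreover have "(\<lambda>x. ennreal (indicator (B 0) x *\<^sub>R w x)) = (\<lambda>x. ennreal (w x) * indicator (B 0) x)"
        by (auto simp: fun_eq_iff split: split_indicator)
      ultimately show ?thesis by (simp add: X_def less_top)
    qed
    have Xp: "0 < X"
    proof (rule ccontr)
      assume "\<not> 0 < X"
      then have "X = 0" by (simp add: not_gr_zero)
      moreover have "(\<lambda>y. ennreal (w y) * indicator (B 0) y) \<in> borel_measurable \<mu>"
        using wm Bs[of 0] by measurable
      ultimately have "AE y in \<mu>. ennreal (w y) * indicator (B 0) y = 0"
        unfolding X_def by (simp add: nn_integral_0_iff_AE)
      then have "AE x in \<mu>. x \<in> B 0 \<longrightarrow> u x = 0"
        by eventually_elim (use u0 in \<open>auto simp: w_def split: split_indicator\<close>)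
      then show False using nz by simp
    qed
    have ainf1: "1 \<le> ainf_const_enn d \<mu> w"
      by (rule ainf_ge1[OF hs wm w0 rad0[of 0], of x0]) (use Xp Xf in \<open>simp_all add: X_def B_def\<close>)
    define A0 where "A0 = ainf_const d \<mu> w"
    have A01: "A0 \<ge> 1"
    proof -
      have "ainf_const_enn d \<mu> w < \<infinity>" using ai by (simp add: in_Ainf_def w_def)
      then have "enn2real 1 \<le> enn2real (ainf_const_enn d \<mu> w)" by (intro enn2real_mono ainf1) simp
      then show ?thesis by (simp add: A0_def ainf_const_def)
    qed
    have \<epsilon>eq: "\<epsilon> = 1 / (2 * \<tau> * A0)" using \<epsilon>d by (simp add: A0_def w_def)
    have \<epsilon>0: "\<epsilon> > 0" using \<epsilon>eq \<tau>0 A01 by simp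
    define p where "p = r * (1 + \<epsilon>)"
    have p1: "p \<ge> 1"
    proof -
      have "1 * 1 \<le> r * (1 + \<epsilon>)" using r1 \<epsilon>0 by (intro mult_mono) auto
      then show ?thesis by (simp add: p_def)
    qed
    have \<kappa>1: "\<kappa> \<epsilon> \<ge> 1" and \<kappa>b: "\<forall>t\<ge>1. A t \<le> \<kappa> \<epsilon> * t powr p"
      using kf \<epsilon>0 by (auto simp: kappa_fun_def p_def)
    define P where "P = 1 + 1 / (\<tau> * A0)"
    have PE: "P = 1 + 2 * \<epsilon>" using \<epsilon>eq \<tau>0 A01 by (simp add: P_def)
    have shP: "loc_int d \<mu> (\<lambda>y. w y powr P) \<and> (\<forall>x \<rho>. \<rho> > 0 \<longrightarrow>
          (avg \<mu> (\<lambda>y. w y powr P) (qball d x \<rho>)) powr (1 / P) \<le> Cs * avg \<mu> w (qball d x (cd * \<rho>)))"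
      using CsP ai unfolding w_def[symmetric] by (simp add: Let_def P_def A0_def)
    have wP: "(\<lambda>y. w y powr P) = (\<lambda>y. u y powr (r * P))" by (simp add: w_def powr_powr fun_eq_iff)
    have uRPi: "set_integrable \<mu> (B i) (\<lambda>y. u y powr (r * P))" for i
      using shP rad0[of i] unfolding wP by (simp add: loc_int_def B_def)
    define m where "m = (4 * p - 1) / 3"
    have pm: "p \<le> m" using p1 by (simp add: m_def)
    have m1: "m \<ge> 1" using p1 by (simp add: m_def)
    have mcase: "m \<le> q \<or> m \<le> r * P"
    proof (cases "r - 1 \<le> 2 * r * \<epsilon>")
      case True
      then have "m \<le> r * P" by (simp add: m_def p_def PE algebra_simps)
      then show ?thesis by simp
    next
      case False
      then have lt: "2 * r * \<epsilon> < r - 1" by simp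
      have e: "p = r + r * \<epsilon>" by (simp add: p_def algebra_simps)
      have lt': "2 * (r * \<epsilon>) < r - 1" using lt by (simp add: mult.assoc)
      have d: "4 * (r + r * \<epsilon>) = 4 * r + 4 * (r * \<epsilon>)" by (simp add: algebra_simps)
      have "4 * (r + r * \<epsilon>) - 1 \<le> 3 * (2 * r - 1)" unfolding d using lt' by (smt (verit))
      then have "m \<le> q" unfolding m_def qd e by simp
      then show ?thesis by simp
    qed
    have umi: "set_integrable \<mu> (B 0) (\<lambda>x. u x powr m)"
    proof (cases "m \<le> q")
      case True
      show ?thesis by (rule set_powmean(1)[OF Bs Bf Bp _ True um u0 uqi]) (use m1 in simp)
    next
      case False
      then have "m \<le> r * P" using mcase by simp
      show ?thesis by (rule set_powmean(1)[OF Bs Bf Bp _ \<open>m \<le> r * P\<close> um u0 uRPi]) (use m1 in simp)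
    qed
    have upi: "set_integrable \<mu> (B 0) (\<lambda>x. u x powr p)"
      by (rule set_powmean(1)[OF Bs Bf Bp _ pm um u0 umi]) (use p1 in simp)
    have gpi: "set_integrable \<mu> (B 0) (\<lambda>x. g x powr p)"
    proof (rule set_integrable_bound[OF upi])
      show "set_borel_measurable \<mu> (B 0) (\<lambda>x. g x powr p)" unfolding set_borel_measurable_def
        using gm Bs[of 0] by measurable
      show "AE x in \<mu>. x \<in> B 0 \<longrightarrow> norm (g x powr p) \<le> norm (u x powr p)"
        using g0 gu p1 by (auto intro!: AE_I2 powr_mono2)
    qed
    define H where "H = avg \<mu> (\<lambda>x. g x powr p) (B 0)"
    have orl: "orlicz_norm \<mu> A g (B 0) \<le> ennreal (2 * \<kappa> \<epsilon> * H powr (1/p))"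
      unfolding H_def by (rule orlicz_bound[OF Bs Bf Bp yf \<kappa>1 p1 \<kappa>b gm g0 gpi])
    define \<theta> where "\<theta> = 1 / (4 * p)"
    define Z where "Z = avg \<mu> g (B 0)"
    define V where "V = (avg \<mu> (\<lambda>x. u x powr m) (B 0)) powr (1/m)"
    have hol: "H powr (1/p) \<le> Z powr \<theta> * V powr (1 - \<theta>)"
      unfolding H_def Z_def V_def \<theta>_def
      by (rule holder_step[OF Bs Bf Bp gm um g0 gu p1 m_def umi])
    define b where "b = (if m \<le> q then a 1 else a 2)"
    have b0: "b \<ge> 0" using a0 by (simp add: b_def)
    have V0: "V \<ge> 0" by (simp add: V_def)
    have Vb: "V \<le> Cs * Ku * b"
    proof (cases "m \<le> q")
      case True
      have "V \<le> (avg \<mu> (\<lambda>y. u y powr q) (B 0)) powr (1/q)"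
        unfolding V_def by (rule set_powmean(2)[OF Bs Bf Bp _ True um u0 uqi]) (use m1 in simp)
      also have "\<dots> \<le> Ku * a 1" using RHi[of 0] by (simp add: a_def)
      also have "\<dots> \<le> Cs * (Ku * a 1)"
      proof -
        have "1 * (Ku * a 1) \<le> Cs * (Ku * a 1)" using Cs1 Ku0 a0[of 1] by (intro mult_right_mono) auto
        then show ?thesis by simp
      qed
      finally show ?thesis using True by (simp add: b_def mult.assoc)
    next
      case False
      then have mP: "m \<le> r * P" using mcase by simp
      have rP0: "r * P > 0" using r1 PE \<epsilon>0 by simp
      have "V \<le> (avg \<mu> (\<lambda>y. u y powr (r * P)) (B 0)) powr (1/(r * P))"
        unfolding V_def by (rule set_powmean(2)[OF Bs Bf Bp _ mP um u0 uRPi]) (use m1 in simp)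
      also have "\<dots> = ((avg \<mu> (\<lambda>y. w y powr P) (B 0)) powr (1/P)) powr (1/r)"
        unfolding wP by (simp add: powr_powr mult.commute)
      also have "\<dots> \<le> (Cs * avg \<mu> w (B 1)) powr (1/r)"
      proof (rule powr_mono2)
        show "0 \<le> 1/r" using r1 by simp
        show "0 \<le> (avg \<mu> (\<lambda>y. w y powr P) (B 0)) powr (1/P)" by simp
        have "(avg \<mu> (\<lambda>y. w y powr P) (qball d x0 (rad 0))) powr (1/P) \<le> Cs * avg \<mu> w (qball d x0 (cd * rad 0))"
          using shP rad0[of 0] by blast
        then show "(avg \<mu> (\<lambda>y. w y powr P) (B 0)) powr (1/P) \<le> Cs * avg \<mu> w (B 1)"
          by (simp add: B_def radS)
      qed
      also have "\<dots> = Cs powr (1/r) * (avg \<mu> w (B 1)) powr (1/r)"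
        using Cs1 avg_nonneg[OF w0, where M=\<mu> and B="B 1"] by (simp add: powr_mult)
      also have "\<dots> \<le> Cs * (avg \<mu> (\<lambda>y. u y powr q) (B 1)) powr (1/q)"
      proof (rule mult_mono)
        have "Cs powr (1/r) \<le> Cs powr 1" by (rule powr_mono) (use r1 Cs1 in auto)
        then show "Cs powr (1/r) \<le> Cs" using Cs1 by simp
        show "(avg \<mu> w (B 1)) powr (1/r) \<le> (avg \<mu> (\<lambda>y. u y powr q) (B 1)) powr (1/q)"
          unfolding w_def by (rule set_powmean(2)[OF Bs Bf Bp _ rq um u0 uqi]) (use r1 in simp)
        show "0 \<le> Cs" using Cs1 by simp
        show "0 \<le> (avg \<mu> w (B 1)) powr (1/r)" by simp
      qed
      also have "\<dots> \<le> Cs * (Ku * a 2)"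
        using RHi[of 1] Cs1 by (intro mult_left_mono) (auto simp: a_def numeral_2_eq_2)
      finally show ?thesis using False by (simp add: b_def mult.assoc)
    qed
    define UG where "UG = wmeas \<mu> u (G \<inter> B 1)"
    define U1 where "U1 = wmeas \<mu> u (B 1)"
    define W where "W = UG / U1"
    have GBs: "G \<inter> B 1 \<in> sets \<mu>" using G Bs by auto
    have UG0: "0 \<le> UG" unfolding UG_def wmeas_def by (rule set_integral_nonneg'[OF u0])
    have UGU1: "UG \<le> U1" unfolding UG_def U1_def wmeas_def
      by (rule set_integral_mono_set'[OF GBs Bs _ u0 ui]) auto
    have W0: "W \<ge> 0" using UG0 UGU1 by (simp add: W_def)
    have Z0: "Z \<ge> 0" unfolding Z_def by (rule avg_nonneg[OF g0])
    have Zb: "Z \<le> W * (D * a 1)"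
    proof -
      have gi: "set_integrable \<mu> (B 0) g"
      proof (rule set_integrable_bound[OF ui[of 0]])
        show "set_borel_measurable \<mu> (B 0) g" unfolding set_borel_measurable_def
          using gm Bs[of 0] by measurable
        show "AE x in \<mu>. x \<in> B 0 \<longrightarrow> norm (g x) \<le> norm (u x)"
          using g0 gu u0 by (auto intro!: AE_I2)
      qed
      have uGi: "set_integrable \<mu> (G \<inter> B 1) u"
        by (rule set_integrable_subset[OF ui[of 1] GBs]) auto
      have "(LINT x:B 0|\<mu>. g x) \<le> UG"
        unfolding UG_def wmeas_def set_lebesgue_integral_def
      proof (rule integral_mono)
        show "integrable \<mu> (\<lambda>x. indicat_real (B 0) x *\<^sub>R g x)" using gi by (simp add: set_integrable_def)
        show "integrable \<mu> (\<lambda>x. indicat_real (G \<inter> B 1) x *\<^sub>R u x)" using uGi by (simp add: set_integrable_def)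
        fix x assume "x \<in> space \<mu>"
        show "indicat_real (B 0) x *\<^sub>R g x \<le> indicat_real (G \<inter> B 1) x *\<^sub>R u x"
          using Bsub[of 0] u0[of x] by (auto simp: g_def split: split_indicator)
      qed
      then have "Z \<le> UG / measure \<mu> (B 0)"
        using Bp[of 0] by (simp add: Z_def avg_def wmeas_def divide_right_mono)
      also have "\<dots> \<le> UG / (measure \<mu> (B 1) / D)"
      proof (rule divide_left_mono)
        show "0 \<le> UG" by (rule UG0)
        show "measure \<mu> (B 1) / D \<le> measure \<mu> (B 0)" using BD[of 0] D1 by (simp add: divide_le_eq mult.commute)
        show "0 < measure \<mu> (B 0) * (measure \<mu> (B 1) / D)" using Bp D1 by simp
      qed
      also have "\<dots> = D * (UG / measure \<mu> (B 1))" using D1 by (simp add: field_simps)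
      also have "UG / measure \<mu> (B 1) = W * a 1"
      proof (cases "U1 = 0")
        case True
        then have "UG = 0" using UG0 UGU1 by simp
        then show ?thesis by (simp add: W_def)
      next
        case False
        then show ?thesis by (simp add: W_def a_def avg_def U1_def)
      qed
      finally show ?thesis by (simp add: mult_ac)
    qed
    define e where "e = 1 + q / (4 * r)"
    have e1: "1 \<le> e" using r1 q1 by (simp add: e_def)
    have e2: "e \<le> 2" using r1 by (simp add: e_def qd field_simps)
    have th0: "0 < \<theta>" and th1: "\<theta> \<le> 1" using p1 by (auto simp: \<theta>_def)
    have a10: "0 \<le> a 1" and a30: "0 \<le> a 3" by (rule a0)+
    have c1a: "a 1 \<le> D^2 * a 3"
    proof -
      have "a 1 \<le> D * a 2" using aD[of 1] by (simp add: numeral_2_eq_2)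
      also have "\<dots> \<le> D * (D * a 3)" using aD[of 2] D1 by (intro mult_left_mono) (auto simp: numeral_3_eq_3)
      finally show ?thesis by (simp add: power2_eq_square mult.assoc)
    qed
    have a2D: "a 2 \<le> D^2 * a 3"
    proof -
      have "a 2 \<le> D * a 3" using aD[of 2] by (simp add: numeral_3_eq_3)
      also have "\<dots> \<le> D * D * a 3" using D1 a0[of 3] by (simp add: mult_right_mono)
      finally show ?thesis by (simp add: power2_eq_square)
    qed
    have c1b: "b \<le> D^2 * a 3" using c1a a2D by (simp add: b_def)
    have a2K: "a 2 \<le> Ku * a 3" using aK[of 2] by (simp add: numeral_3_eq_3)
    have c2a: "a 1 \<le> Ku^2 * a 3"
    proof -
      have "a 1 \<le> Ku * a 2" using aK[of 1] by (simp add: numeral_2_eq_2)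
      also have "\<dots> \<le> Ku * (Ku * a 3)" using a2K Ku0 by (intro mult_left_mono) auto
      finally show ?thesis by (simp add: power2_eq_square mult.assoc)
    qed
    have c2b: "b \<le> Ku * a 3" if "Ku < 1"
    proof (cases "m \<le> q")
      case True
      have "Ku^2 * a 3 \<le> Ku * a 3" using that Ku0 a0[of 3]
      proof (intro mult_right_mono)
        have "Ku * Ku \<le> Ku * 1" using that Ku0 by (intro mult_left_mono) auto
        then show "Ku^2 \<le> Ku" by (simp add: power2_eq_square)
      qed simp
      then show ?thesis using c2a True by (simp add: b_def)
    next
      case False then show ?thesis using a2K by (simp add: b_def)
    qed
    have fin: "2 * \<kappa> \<epsilon> * (Z powr \<theta> * V powr (1 - \<theta>)) \<le> (2 * D^3 * Cs) * \<kappa> \<epsilon> * Ku powr e * a 3 * W powr \<theta>"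
      by (rule final_alg[OF th0 th1 e1 e2 D1 Cs1 Ku0 _ W0 Z0 Zb V0 Vb a10 b0 a30 c1a c1b c2a c2b])
         (use \<kappa>1 in simp)
    have "orlicz_norm \<mu> A g (B 0) \<le> ennreal (2 * \<kappa> \<epsilon> * (Z powr \<theta> * V powr (1 - \<theta>)))"
    proof -
      have "2 * \<kappa> \<epsilon> * H powr (1/p) \<le> 2 * \<kappa> \<epsilon> * (Z powr \<theta> * V powr (1 - \<theta>))"
        using hol \<kappa>1 by (intro mult_left_mono) auto
      then have "ennreal (2 * \<kappa> \<epsilon> * H powr (1/p)) \<le> ennreal (2 * \<kappa> \<epsilon> * (Z powr \<theta> * V powr (1 - \<theta>)))"
        by (rule ennreal_leI)
      then show ?thesis using orl by (rule order_trans[rotated])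
    qed
    also have "\<dots> \<le> ennreal ((2 * D^3 * Cs) * \<kappa> \<epsilon> * Ku powr e * a 3 * W powr \<theta>)"
      by (rule ennreal_leI[OF fin])
    finally have "orlicz_norm \<mu> A g (B 0) \<le> ennreal ((2 * D^3 * Cs) * \<kappa> \<epsilon> * Ku powr e * a 3 * W powr \<theta>)" .
    moreover have "wavg_char \<mu> u G (B 1) s = W powr \<theta>"
    proof -
      have "1 / s = \<theta>" by (simp add: sd \<theta>_def p_def mult_ac)
      then show ?thesis by (simp add: wavg_char_def W_def UG_def U1_def)
    qed
    ultimately show ?thesis
      by (simp add: B0dil B1dil Bdil[of 3, symmetric] g_def Ku_def e_def a_def)
  qed
qed



theorem lemma3p10:
  fixes d :: "'a \<Rightarrow> 'a \<Rightarrow> real" and \<mu> :: "'a measure" and K :: real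
    and c0 C0 \<delta> :: real and J :: "int \<Rightarrow> 'i set" and Q :: "int \<Rightarrow> 'i \<Rightarrow> 'a set"
    and z :: "int \<Rightarrow> 'i \<Rightarrow> 'a" and cd \<tau> :: real
  assumes "homogeneous_space d K \<mu>"
    and "dyadic_system d \<mu> c0 C0 \<delta> J Q z"
    and "1 \<le> cd" and "sharp_RH d \<mu> cd \<tau>"
  shows "\<exists>c>0. \<forall>(r::real) (A::real \<Rightarrow> real) (\<kappa>::real \<Rightarrow> real) (u::'a \<Rightarrow> real) k j G.
     1 \<le> r \<longrightarrow> young_function A \<longrightarrow> (\<forall>\<rho>>r. B_cond A \<rho>) \<longrightarrow> kappa_fun A r \<kappa> \<longrightarrow>
     in_RH d \<mu> cd (2 * r - 1) u \<longrightarrow> in_Ainf d \<mu> (\<lambda>x. u x powr r) \<longrightarrow>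
     j \<in> J k \<longrightarrow> G \<in> sets \<mu> \<longrightarrow>
     (let q = 2 * r - 1;
          \<epsilon> = 1 / (2 * \<tau> * ainf_const d \<mu> (\<lambda>x. u x powr r));
          s = 4 * (1 + \<epsilon>) * r
      in orlicz_norm \<mu> A (\<lambda>x. indicator G x * u x) (dil_cube d C0 \<delta> z 1 k j)
         \<le> ennreal (c * \<kappa> \<epsilon> * rh_const d \<mu> cd q u powr (1 + q / (4 * r))
                    * avg \<mu> u (dil_cube d C0 \<delta> z (cd ^ 3) k j)
                    * wavg_char \<mu> u G (dil_cube d C0 \<delta> z cd k j) s))"
proof -
  obtain D where D1: "D \<ge> 1" and Dd: "\<forall>x \<rho>. \<rho> > 0 \<longrightarrow> measure \<mu> (qball d x (cd * \<rho>)) \<le> D * measure \<mu> (qball d x \<rho>)"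
    using hs_doubling[OF assms(1) assms(3)] by blast
  have \<tau>0: "\<tau> > 0" using assms(4) by (simp add: sharp_RH_def)
  obtain C where C: "\<forall>w. in_Ainf d \<mu> w \<longrightarrow> (let P = 1 + 1 / (\<tau> * ainf_const d \<mu> w) in
       loc_int d \<mu> (\<lambda>y. w y powr P) \<and>
       (\<forall>x \<rho>. \<rho> > 0 \<longrightarrow>
          (avg \<mu> (\<lambda>y. w y powr P) (qball d x \<rho>)) powr (1 / P) \<le> C * avg \<mu> w (qball d x (cd * \<rho>))))"
    using assms(4) unfolding sharp_RH_def by blast
  define Cs where "Cs = max C 1"
  have Cs1: "Cs \<ge> 1" by (simp add: Cs_def)
  have CsP: "\<forall>w. in_Ainf d \<mu> w \<longrightarrow> (let P = 1 + 1 / (\<tau> * ainf_const d \<mu> w) in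
       loc_int d \<mu> (\<lambda>y. w y powr P) \<and>
       (\<forall>x \<rho>. \<rho> > 0 \<longrightarrow>
          (avg \<mu> (\<lambda>y. w y powr P) (qball d x \<rho>)) powr (1 / P) \<le> Cs * avg \<mu> w (qball d x (cd * \<rho>))))"
  proof (intro allI impI)
    fix w assume wA: "in_Ainf d \<mu> w"
    have w0: "\<And>x. 0 \<le> w x" using wA by (simp add: in_Ainf_def weight_def)
    define P where "P = 1 + 1 / (\<tau> * ainf_const d \<mu> w)"
    have h: "loc_int d \<mu> (\<lambda>y. w y powr P) \<and>
       (\<forall>x \<rho>. \<rho> > 0 \<longrightarrow>
          (avg \<mu> (\<lambda>y. w y powr P) (qball d x \<rho>)) powr (1 / P) \<le> C * avg \<mu> w (qball d x (cd * \<rho>)))"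
      using C wA unfolding P_def Let_def by blast
    have "loc_int d \<mu> (\<lambda>y. w y powr P) \<and>
       (\<forall>x \<rho>. \<rho> > 0 \<longrightarrow>
          (avg \<mu> (\<lambda>y. w y powr P) (qball d x \<rho>)) powr (1 / P) \<le> Cs * avg \<mu> w (qball d x (cd * \<rho>)))"
    proof (intro conjI allI impI)
      show "loc_int d \<mu> (\<lambda>y. w y powr P)" using h by blast
      fix x \<rho> assume r: "(\<rho>::real) > 0"
      have "(avg \<mu> (\<lambda>y. w y powr P) (qball d x \<rho>)) powr (1 / P) \<le> C * avg \<mu> w (qball d x (cd * \<rho>))"
        using h r by blast
      also have "\<dots> \<le> Cs * avg \<mu> w (qball d x (cd * \<rho>))"
        by (intro mult_right_mono avg_nonneg w0) (simp add: Cs_def)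
      finally show "(avg \<mu> (\<lambda>y. w y powr P) (qball d x \<rho>)) powr (1 / P) \<le> Cs * avg \<mu> w (qball d x (cd * \<rho>))" .
    qed
    then show "let P = 1 + 1 / (\<tau> * ainf_const d \<mu> w) in
       loc_int d \<mu> (\<lambda>y. w y powr P) \<and>
       (\<forall>x \<rho>. \<rho> > 0 \<longrightarrow>
          (avg \<mu> (\<lambda>y. w y powr P) (qball d x \<rho>)) powr (1 / P) \<le> Cs * avg \<mu> w (qball d x (cd * \<rho>)))"
      unfolding P_def Let_def .
  qed
  show ?thesis
  proof (rule exI[of _ "2 * D^3 * Cs"], intro conjI allI impI)
    show "0 < 2 * D^3 * Cs" using D1 Cs1 by simp
    fix r A \<kappa> u k j G
    assume r1: "1 \<le> (r::real)" and yf: "young_function A" and "\<forall>\<rho>>r. B_cond A \<rho>"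
      and kf: "kappa_fun A r \<kappa>" and rh: "in_RH d \<mu> cd (2 * r - 1) u"
      and ai: "in_Ainf d \<mu> (\<lambda>x. u x powr r)" and "j \<in> J k" and G: "G \<in> sets \<mu>"
    show "let q = 2 * r - 1;
          \<epsilon> = 1 / (2 * \<tau> * ainf_const d \<mu> (\<lambda>x. u x powr r));
          s = 4 * (1 + \<epsilon>) * r
      in orlicz_norm \<mu> A (\<lambda>x. indicator G x * u x) (dil_cube d C0 \<delta> z 1 k j)
         \<le> ennreal (2 * D^3 * Cs * \<kappa> \<epsilon> * rh_const d \<mu> cd q u powr (1 + q / (4 * r))
                    * avg \<mu> u (dil_cube d C0 \<delta> z (cd ^ 3) k j)
                    * wavg_char \<mu> u G (dil_cube d C0 \<delta> z cd k j) s)"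
      unfolding Let_def
      by (rule main_est[OF assms(1) assms(2) assms(3) D1 Dd \<tau>0 Cs1 CsP r1 yf kf rh ai G refl refl refl])
  qed
qed

end
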